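(* For every $\lambda \in (0,1/2)$ and every $\delta > 0$ there exist positive constants $\gamma = \gamma(\lambda,\delta)$, $\tau = \tau(\lambda,\delta)$ and an integer $n_0 = n_0(\lambda,\delta)$ such that the following holds. Let $p \in (\lambda, 1-\lambda)$, let $n \geq n_0$, and let $f : \{0,1\}^{2n} \to \{0,1\}$ be a function with total influence $\mathbf{I}^{(p)}[f] \leq \gamma \cdot n$. Suppose $i \in [2n]$ satisfies $\mathrm{Inf}^{(p)}[f, i] \geq \delta$. Then \[ \Pr_{\pi}\Big[\mathrm{Inf}^{(p)}[f^\pi, \pi(i)] \geq \tau\Big] \geq \tau, \] where $\pi : [2n] \to [n]$ is a uniformly random $2$-to-$1$ map.
   Context: For $p \in (0,1)$, $\mu_{p,n}$ denotes the product $p$-biased distribution on $\{0,1\}^n$, in which each coordinate is $1$ independently with probability $p$. For $x \in \{0,1\}^n$, $i\in[n]$ and $s \in \{0,1\}$, $x^{i \to s}$ is $x$ with its $i$-th coordinate set to $s$. For $f : \{0,1\}^n \to \mathbb{R}$, the influence of coordinate $i$ is $\mathrm{Inf}^{(p)}[f,i] = \mathbb{E}_{x \sim \mu_{p,n}}\big[(f(x) - \mathbb{E}_{s \sim \mu_{p,1}}[f(x^{i\to s})])^2\big]$; for Boolean-valued $f$ this equals $p(1-p)\Pr_{x\sim\mu_{p,n}}[f(x)\neq f(x\oplus i)]$, where $x\oplus i$ is $x$ with the $i$-th bit flipped. The total influence is $\mathbf{I}^{(p)}[f] = \sum_{i=1}^n \mathrm{Inf}^{(p)}[f,i]$. A map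 $\pi:[2n]\to[n]$ is $2$-to-$1$ if every element of $[n]$ has exactly two preimages. For $\pi : [m] \to [k]$ and $f:\{0,1\}^m\to\{0,1\}$, the minor $f^\pi : \{0,1\}^k \to \{0,1\}$ is $f^\pi(y) = f(y_{\pi(1)}, \dots, y_{\pi(m)})$. *)

theory Defs
  imports "HOL-Analysis.Analysis"
begin

text \<open>Points of the cube {0,1}^m are functions nat => bool that vanish (are False)
  at every coordinate j >= m; coordinates are indexed 0..m-1.\<close>
definition cube :: "nat \<Rightarrow> (nat \<Rightarrow> bool) set" where
  "cube m = {x. \<forall>j. m \<le> j \<longrightarrow> \<not> x j}"

definition mu :: "real \<Rightarrow> nat \<Rightarrow> (nat \<Rightarrow> bool) \<Rightarrow> real" where
  "mu p m x = (\<Prod>j<m. if x j then p else 1 - p)"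

definition influence :: "real \<Rightarrow> nat \<Rightarrow> ((nat \<Rightarrow> bool) \<Rightarrow> real) \<Rightarrow> nat \<Rightarrow> real" where
  "influence p m g i =
     (\<Sum>x\<in>cube m. mu p m x *
        (g x - (p * g (x(i := True)) + (1 - p) * g (x(i := False))))^2)"

definition total_influence :: "real \<Rightarrow> nat \<Rightarrow> ((nat \<Rightarrow> bool) \<Rightarrow> real) \<Rightarrow> real" where
  "total_influence p m g = (\<Sum>i<m. influence p m g i)"

definition bval :: "((nat \<Rightarrow> bool) \<Rightarrow> bool) \<Rightarrow> (nat \<Rightarrow> bool) \<Rightarrow> real" where
  "bval f x = (if f x then 1 else 0)"

definition two_to_one_maps :: "nat \<Rightarrow> (nat \<Rightarrow> nat) set" where
  "two_to_one_maps n = {\<pi> \<in> {0..<2*n} \<rightarrow>\<^sub>E {0..<n}.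
      \<forall>k<n. card {j\<in>{0..<2*n}. \<pi> j = k} = 2}"

definition minor :: "nat \<Rightarrow> ((nat \<Rightarrow> bool) \<Rightarrow> bool) \<Rightarrow> (nat \<Rightarrow> nat) \<Rightarrow> (nat \<Rightarrow> bool) \<Rightarrow> bool" where
  "minor m f \<pi> y = f (\<lambda>j. if j < m then y (\<pi> j) else False)"

end

theory Submission
  imports Defs
begin


definition wt :: "(nat \<Rightarrow> bool) \<Rightarrow> nat" where "wt x = card {j. x j}"
definition flip :: "(nat \<Rightarrow> bool) \<Rightarrow> nat \<Rightarrow> (nat \<Rightarrow> bool)" where "flip x j = x(j := \<not> x j)"

lemma cube_Suc: "cube (Suc m) = cube m \<union> (\<lambda>x. x(m:=True)) ` cube m"
proof (intro set_eqI iffI)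
  fix x assume x: "x \<in> cube (Suc m)"
  show "x \<in> cube m \<union> (\<lambda>x. x(m:=True)) ` cube m"
  proof (cases "x m")
    case True
    have "x(m:=False) \<in> cube m" using x by (auto simp: cube_def)
    moreover have "x = (x(m:=False))(m:=True)" using True by (simp add: fun_upd_idem)
    ultimately show ?thesis by blast
  next
    case False
    have "\<forall>j. m \<le> j \<longrightarrow> \<not> x j"
    proof (intro allI impI)
      fix j assume "m \<le> j"
      then show "\<not> x j" using x False by (cases "j = m") (auto simp: cube_def)
    qed
    then have "x \<in> cube m" by (simp add: cube_def)
    then show ?thesis by blast
  qed
next
  fix x assume "x \<in> cube m \<union> (\<lambda>x. x(m:=True)) ` cube m"
  then show "x \<in> cube (Suc m)" by (auto simp: cube_def)
qed

lemma cube0: "cube 0 = {\<lambda>_. False}"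
  by (auto simp: cube_def)

lemma finite_cube: "finite (cube m)"
  by (induction m) (simp_all add: cube_Suc cube0)

lemma cube_notm: "x \<in> cube m \<Longrightarrow> \<not> x m"
  by (auto simp: cube_def)

lemma sum_cube_Suc:
  fixes \<phi> :: "(nat \<Rightarrow> bool) \<Rightarrow> real"
  shows "(\<Sum>x\<in>cube (Suc m). \<phi> x) = (\<Sum>x\<in>cube m. \<phi> x + \<phi> (x(m:=True)))"
proof -
  have d: "cube m \<inter> (\<lambda>x. x(m:=True)) ` cube m = {}"
    by (auto simp: cube_def)
  have inj: "inj_on (\<lambda>x. x(m:=True)) (cube m)"
  proof (rule inj_onI)
    fix x y assume "x \<in> cube m" "y \<in> cube m" "x(m:=True) = y(m:=True)"
    then have "(x(m:=True))(m:=False) = (y(m:=True))(m:=False)" by simp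
    moreover have "(x(m:=True))(m:=False) = x" using cube_notm[OF \<open>x \<in> cube m\<close>] by (simp add: fun_upd_idem)
    moreover have "(y(m:=True))(m:=False) = y" using cube_notm[OF \<open>y \<in> cube m\<close>] by (simp add: fun_upd_idem)
    ultimately show "x = y" by simp
  qed
  have "(\<Sum>x\<in>cube (Suc m). \<phi> x) = (\<Sum>x\<in>cube m. \<phi> x) + (\<Sum>x\<in>(\<lambda>x. x(m:=True)) ` cube m. \<phi> x)"
    unfolding cube_Suc by (rule sum.union_disjoint) (auto simp: finite_cube d)
  also have "(\<Sum>x\<in>(\<lambda>x. x(m:=True)) ` cube m. \<phi> x) = (\<Sum>x\<in>cube m. \<phi> (x(m:=True)))"
    by (rule sum.reindex[OF inj, unfolded comp_def])
  finally show ?thesis by (simp add: sum.distrib)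
qed

lemma mu_Suc1: "x \<in> cube m \<Longrightarrow> mu p (Suc m) x = (1-p) * mu p m x"
  by (simp add: mu_def cube_notm)

lemma mu_Suc2: "x \<in> cube m \<Longrightarrow> mu p (Suc m) (x(m:=True)) = p * mu p m x"
proof -
  have "(\<Prod>j<m. if (x(m:=True)) j then p else 1 - p) = (\<Prod>j<m. if x j then p else 1 - p)"
    by (rule prod.cong) auto
  then show ?thesis by (simp add: mu_def mult.commute)
qed

lemma finite_ones: "x \<in> cube m \<Longrightarrow> finite {j. x j}"
  by (rule finite_subset[of _ "{..<m}"]) (auto simp: cube_def not_le[symmetric])

lemma ones_sub: "x \<in> cube m \<Longrightarrow> {j. x j} \<subseteq> {..<m}"
  by (auto simp: cube_def not_le[symmetric])

lemma wt_upd: "x \<in> cube m \<Longrightarrow> wt (x(m:=True)) = Suc (wt x)"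
proof -
  assume x: "x \<in> cube m"
  have "{j. (x(m:=True)) j} = insert m {j. x j}" by auto
  then show ?thesis using x finite_ones[OF x] cube_notm[OF x] by (simp add: wt_def)
qed

lemma wt_le: "x \<in> cube m \<Longrightarrow> wt x \<le> m"
  using card_mono[OF _ ones_sub] by (fastforce simp: wt_def)

lemma mu_nonneg: "0 \<le> p \<Longrightarrow> p \<le> 1 \<Longrightarrow> 0 \<le> mu p m x"
  by (auto simp: mu_def intro!: prod_nonneg)

lemma E0: "(\<Sum>x\<in>cube m. mu p m x) = 1"
proof (induction m)
  case 0
  have "cube 0 = {\<lambda>_. False}" by (auto simp: cube_def)
  then show ?case by (simp add: mu_def)
next
  case (Suc m)
  have "(\<Sum>x\<in>cube (Suc m). mu p (Suc m) x) = (\<Sum>x\<in>cube m. (1-p) * mu p m x + p * mu p m x)"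
    by (simp add: sum_cube_Suc mu_Suc1 mu_Suc2 cong: sum.cong)
  also have "\<dots> = (\<Sum>x\<in>cube m. mu p m x)" by (simp add: algebra_simps)
  finally show ?case using Suc by simp
qed

lemma E1: "(\<Sum>x\<in>cube m. mu p m x * real (wt x)) = m * p"
proof (induction m)
  case 0
  have "cube 0 = {\<lambda>_. False}" by (auto simp: cube_def)
  then show ?case by (simp add: mu_def wt_def)
next
  case (Suc m)
  have "(\<Sum>x\<in>cube (Suc m). mu p (Suc m) x * real (wt x)) =
     (\<Sum>x\<in>cube m. (1-p) * mu p m x * real (wt x) + p * mu p m x * (1 + real (wt x)))"
    by (simp add: sum_cube_Suc mu_Suc1 mu_Suc2 wt_upd cong: sum.cong)
  also have "\<dots> = (\<Sum>x\<in>cube m. mu p m x * real (wt x)) + p * (\<Sum>x\<in>cube m. mu p m x)"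
    by (simp add: algebra_simps sum.distrib sum_distrib_left)
  finally show ?case using Suc E0[where m=m and p=p] by (simp add: algebra_simps)
qed

lemma E2: "(\<Sum>x\<in>cube m. mu p m x * real (wt x)^2) = m * p + m * (m - 1) * p^2"
proof (induction m)
  case 0
  have "cube 0 = {\<lambda>_. False}" by (auto simp: cube_def)
  then show ?case by (simp add: mu_def wt_def)
next
  case (Suc m)
  have "(\<Sum>x\<in>cube (Suc m). mu p (Suc m) x * real (wt x)^2) =
     (\<Sum>x\<in>cube m. (1-p) * mu p m x * real (wt x)^2 + p * mu p m x * (1 + real (wt x))^2)"
    by (simp add: sum_cube_Suc mu_Suc1 mu_Suc2 wt_upd cong: sum.cong)
  also have "\<dots> = (\<Sum>x\<in>cube m. mu p m x * real (wt x)^2) + 2 * p * (\<Sum>x\<in>cube m. mu p m x * real (wt x))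
      + p * (\<Sum>x\<in>cube m. mu p m x)"
    by (simp add: algebra_simps power2_eq_square sum.distrib sum_distrib_left)
  finally show ?case using Suc E0[where m=m and p=p] E1[where m=m and p=p]
    by (cases m) (simp_all add: algebra_simps power2_eq_square)
qed

lemma variance: "(\<Sum>x\<in>cube m. mu p m x * (real (wt x) - real m * p)^2) = real m * p * (1 - p)"
proof -
  have "(\<Sum>x\<in>cube m. mu p m x * (real (wt x) - real m * p)^2) =
     (\<Sum>x\<in>cube m. mu p m x * real (wt x)^2) - 2 * real m * p * (\<Sum>x\<in>cube m. mu p m x * real (wt x))
      + (real m*p)^2 * (\<Sum>x\<in>cube m. mu p m x)"
    by (simp add: power2_eq_square algebra_simps sum.distrib sum_distrib_left sum_subtractf)
  also have "\<dots> = real m * p * (1 - p)" using E0[where m=m and p=p] E1[where m=m and p=p] E2[where m=m and p=p]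
    by (cases m) (simp_all add: algebra_simps power2_eq_square)
  finally show ?thesis .
qed

lemma chebyshev:
  assumes "0 \<le> p" "p \<le> 1" "L > 0"
  shows "(\<Sum>x\<in>cube m. mu p m x * (if \<bar>real (wt x) - m * p\<bar> > L then 1 else 0)) \<le> m / (4 * L^2)"
proof -
  have "(\<Sum>x\<in>cube m. mu p m x * (if \<bar>real (wt x) - m * p\<bar> > L then 1 else 0))
      \<le> (\<Sum>x\<in>cube m. mu p m x * ((real (wt x) - m * p)^2 / L^2))"
  proof (rule sum_mono)
    fix x
    have "(if \<bar>real (wt x) - m * p\<bar> > L then 1 else 0) \<le> ((real (wt x) - m * p)^2 / L^2)"
    proof (cases "\<bar>real (wt x) - m * p\<bar> > L")
      case True
      then have "L^2 \<le> (real (wt x) - m * p)^2"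
        by (metis abs_ge_zero abs_le_square_iff assms(3) less_eq_real_def power2_abs abs_of_pos)
      then show ?thesis using True assms by (simp add: field_simps)
    qed simp
    then show "mu p m x * (if \<bar>real (wt x) - m * p\<bar> > L then 1 else 0) \<le> mu p m x * ((real (wt x) - m * p)^2 / L^2)"
      by (rule mult_left_mono) (simp add: mu_nonneg assms)
  qed
  also have "\<dots> = (\<Sum>x\<in>cube m. mu p m x * (real (wt x) - real m * p)^2) / L^2"
    by (simp add: sum_divide_distrib)
  also have "\<dots> = (real m * p * (1-p)) / L^2" by (simp only: variance)
  also have "\<dots> \<le> m / (4 * L^2)"
  proof -
    have h: "0 \<le> (p - 1/2) * (p - 1/2)" by simp
    have "(p - 1/2) * (p - 1/2) = p*p - p + 1/4" by (simp add: algebra_simps)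
    moreover have "p * (1 - p) = p - p*p" by (simp add: algebra_simps)
    ultimately have "p * (1 - p) \<le> 1/4" using h by (smt (verit))
    then have "real m * (p * (1-p)) \<le> real m * (1/4)" by (rule mult_left_mono) simp
    then have "real m * p * (1-p) \<le> real m / 4" by (simp add: mult.assoc)
    then have "real m * p * (1-p) / L^2 \<le> (real m / 4) / L^2" by (rule divide_right_mono) simp
    then show ?thesis by simp
  qed
  finally show ?thesis .
qed



lemma flip_cube: "x \<in> cube m \<Longrightarrow> j < m \<Longrightarrow> flip x j \<in> cube m"
  by (auto simp: cube_def flip_def)

lemma flip_flip[simp]: "flip (flip x j) j = x"
  by (auto simp: flip_def)

lemma flip_at[simp]: "flip x j j = (\<not> x j)"
  by (simp add: flip_def)

lemma mu_flip:
  assumes "j < m"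
  shows "mu p m (flip x j) * (if x j then p else 1-p) = mu p m x * (if x j then 1-p else p)"
proof -
  let ?F = "\<lambda>y j. if y j then p else 1 - p"
  have "mu p m x = ?F x j * (\<Prod>l\<in>{..<m}-{j}. ?F x l)"
    unfolding mu_def using assms by (subst prod.remove[of _ j]) auto
  moreover have "mu p m (flip x j) = ?F (flip x j) j * (\<Prod>l\<in>{..<m}-{j}. ?F (flip x j) l)"
    unfolding mu_def using assms by (subst prod.remove[of _ j]) auto
  moreover have "(\<Prod>l\<in>{..<m}-{j}. ?F (flip x j) l) = (\<Prod>l\<in>{..<m}-{j}. ?F x l)"
    by (rule prod.cong) (auto simp: flip_def)
  ultimately show ?thesis by (auto simp: flip_def)
qed

lemma mu_flip_le:
  assumes "j < m" "0 < lam" "lam < p" "p < 1 - lam"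
  shows "mu p m (flip x j) \<le> mu p m x / lam - mu p m x"
proof -
  have mx: "0 \<le> mu p m x" using assms by (intro mu_nonneg) auto
  have key: "mu p m (flip x j) * (if x j then p else 1-p) = mu p m x * (if x j then 1-p else p)"
    by (rule mu_flip[OF assms(1)])
  have b: "mu p m x * (1 - lam) / lam = mu p m x / lam - mu p m x" using assms by (simp add: field_simps)
  show ?thesis
  proof (cases "x j")
    case True
    then have "mu p m (flip x j) = mu p m x * (1-p) / p" using key assms by (simp add: field_simps)
    also have "\<dots> \<le> mu p m x * (1 - lam) / lam"
    proof -
      have "(1-p)/p \<le> (1-lam)/lam" using assms by (simp add: field_simps)
      then show ?thesis using mx by (metis mult_left_mono times_divide_eq_right)
    qed
    finally show ?thesis using b by simp
  next
    case False
    then have "mu p m (flip x j) = mu p m x * p / (1-p)" using key assms by (simp add: field_simps)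
    also have "\<dots> \<le> mu p m x * (1 - lam) / lam"
    proof -
      have "p/(1-p) \<le> (1-lam)/lam" using assms by (simp add: field_simps)
      then show ?thesis using mx by (metis mult_left_mono times_divide_eq_right)
    qed
    finally show ?thesis using b by simp
  qed
qed

lemma mu_wt:
  assumes "x \<in> cube m"
  shows "mu p m x = p ^ wt x * (1-p) ^ (m - wt x)"
proof -
  have "mu p m x = (\<Prod>j\<in>{..<m} \<inter> {j. x j}. p) * (\<Prod>j\<in>{..<m} \<inter> - {j. x j}. 1 - p)"
    unfolding mu_def by (rule prod.If_cases) simp
  moreover have "{..<m} \<inter> {j. x j} = {j. x j}" using ones_sub[OF assms] by blast
  moreover have "card ({..<m} \<inter> - {j. x j}) = m - wt x"
  proof -
    have "{..<m} \<inter> - {j. x j} = {..<m} - {j. x j}" by blast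
    then show ?thesis using ones_sub[OF assms] finite_ones[OF assms]
      by (simp add: card_Diff_subset wt_def)
  qed
  ultimately show ?thesis by (simp add: wt_def)
qed

lemma infl_term:
  "(bval g x - (p * bval g (x(c := True)) + (1 - p) * bval g (x(c := False))))^2
   = (if x c then (1-p)^2 else p^2) * of_bool (g x \<noteq> g (flip x c))"
proof (cases "x c")
  case True
  then have "x(c:=True) = x" "x(c:=False) = flip x c" by (auto simp: flip_def fun_upd_idem)
  then show ?thesis using True by (auto simp: bval_def power2_eq_square algebra_simps)
next
  case False
  then have "x(c:=False) = x" "x(c:=True) = flip x c" by (auto simp: flip_def fun_upd_idem)
  then show ?thesis using False by (auto simp: bval_def power2_eq_square algebra_simps)
qed

lemma infl_eq: "influence p m (bval g) c =
  (\<Sum>x\<in>cube m. mu p m x * ((if x c then (1-p)^2 else p^2) * of_bool (g x \<noteq> g (flip x c))))"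
  unfolding influence_def infl_term ..

lemma infl_upper:
  assumes "0 \<le> p" "p \<le> 1"
  shows "influence p m (bval g) c \<le> (\<Sum>x\<in>cube m. mu p m x * of_bool (g x \<noteq> g (flip x c)))"
  unfolding infl_eq
proof (rule sum_mono)
  fix x
  have "(if x c then (1-p)^2 else p^2) \<le> (1::real)" using assms by (auto simp: power_le_one)
  then have "(if x c then (1-p)^2 else p^2) * of_bool (g x \<noteq> g (flip x c)) \<le> of_bool (g x \<noteq> g (flip x c))"
    by auto
  then show "mu p m x * ((if x c then (1-p)^2 else p^2) * of_bool (g x \<noteq> g (flip x c))) \<le> mu p m x * of_bool (g x \<noteq> g (flip x c))"
    by (rule mult_left_mono) (simp add: mu_nonneg assms)
qed

lemma infl_lower:
  assumes "0 < lam" "lam < p" "p < 1 - lam"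
  shows "lam^2 * (\<Sum>x\<in>cube m. mu p m x * of_bool (g x \<noteq> g (flip x c))) \<le> influence p m (bval g) c"
  unfolding infl_eq sum_distrib_left
proof (rule sum_mono)
  fix x
  have "lam^2 \<le> (if x c then (1-p)^2 else p^2)" using assms by (auto intro!: power_mono)
  then have "lam^2 * of_bool (g x \<noteq> g (flip x c)) \<le> (if x c then (1-p)^2 else p^2) * of_bool (g x \<noteq> g (flip x c))"
    by auto
  then show "lam^2 * (mu p m x * of_bool (g x \<noteq> g (flip x c))) \<le> mu p m x * ((if x c then (1-p)^2 else p^2) * of_bool (g x \<noteq> g (flip x c)))"
    using mult_left_mono[OF _ mu_nonneg[of p m x]] assms by (simp add: mult.left_commute)
qed

lemma infl_le1:
  assumes "0 \<le> p" "p \<le> 1"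
  shows "influence p m (bval g) c \<le> 1"
proof -
  have "influence p m (bval g) c \<le> (\<Sum>x\<in>cube m. mu p m x * of_bool (g x \<noteq> g (flip x c)))"
    by (rule infl_upper[OF assms])
  also have "\<dots> \<le> (\<Sum>x\<in>cube m. mu p m x)"
    by (rule sum_mono) (simp add: mu_nonneg assms)
  finally show ?thesis by (simp add: E0)
qed

lemma infl_nonneg:
  assumes "0 \<le> p" "p \<le> 1"
  shows "0 \<le> influence p m (bval g) c"
  unfolding infl_eq by (intro sum_nonneg mult_nonneg_nonneg) (auto simp: mu_nonneg assms)



definition emb :: "nat \<Rightarrow> (nat \<Rightarrow> nat) \<Rightarrow> (nat \<Rightarrow> bool) \<Rightarrow> (nat \<Rightarrow> bool)" where
  "emb n \<pi> y = (\<lambda>j. if j < 2*n then y (\<pi> j) else False)"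

lemma minor_emb: "minor (2*n) f \<pi> y = f (emb n \<pi> y)"
  by (simp add: minor_def emb_def)

lemma Pi_mem: "\<pi> \<in> two_to_one_maps n \<Longrightarrow> j < 2*n \<Longrightarrow> \<pi> j < n"
  by (auto simp: two_to_one_maps_def PiE_iff)

lemma Pi_fiber: "\<pi> \<in> two_to_one_maps n \<Longrightarrow> k < n \<Longrightarrow> card {j\<in>{0..<2*n}. \<pi> j = k} = 2"
  by (auto simp: two_to_one_maps_def)

lemma finite_Pi: "finite (two_to_one_maps n)"
proof -
  have "two_to_one_maps n \<subseteq> {0..<2*n} \<rightarrow>\<^sub>E {0..<n}" by (auto simp: two_to_one_maps_def)
  then show ?thesis by (rule finite_subset) (simp add: finite_PiE)
qed

lemma Pi_ne: "two_to_one_maps n \<noteq> {}"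
proof -
  define \<pi> where "\<pi> = (\<lambda>j. if j < 2*n then j div 2 else undefined)"
  have "\<pi> \<in> {0..<2*n} \<rightarrow>\<^sub>E {0..<n}" by (auto simp: \<pi>_def PiE_iff extensional_def less_mult_imp_div_less)
  moreover have "card {j\<in>{0..<2*n}. \<pi> j = k} = 2" if "k < n" for k
  proof -
    have "{j\<in>{0..<2*n}. \<pi> j = k} = {2*k, 2*k+1}" using that by (auto simp: \<pi>_def)
    then show ?thesis by simp
  qed
  ultimately have "\<pi> \<in> two_to_one_maps n" by (auto simp: two_to_one_maps_def)
  then show ?thesis by blast
qed

lemma emb_cube: "emb n \<pi> y \<in> cube (2*n)"
  by (auto simp: emb_def cube_def)

lemma fiber_ne:
  assumes "\<pi> \<in> two_to_one_maps n" "k < n"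
  shows "\<exists>j<2*n. \<pi> j = k"
proof -
  have "card {j\<in>{0..<2*n}. \<pi> j = k} = 2" by (rule Pi_fiber[OF assms])
  then have "{j\<in>{0..<2*n}. \<pi> j = k} \<noteq> {}" by (metis card.empty zero_neq_numeral)
  then show ?thesis by auto
qed

lemma emb_inj:
  assumes "\<pi> \<in> two_to_one_maps n"
  shows "inj_on (emb n \<pi>) (cube n)"
proof (rule inj_onI)
  fix y y' assume y: "y \<in> cube n" and y': "y' \<in> cube n" and e: "emb n \<pi> y = emb n \<pi> y'"
  show "y = y'"
  proof
    fix k show "y k = y' k"
    proof (cases "k < n")
      case True
      then obtain j where "j < 2*n" "\<pi> j = k" using fiber_ne[OF assms] by blast
      then show ?thesis using fun_cong[OF e, of j] by (auto simp: emb_def)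
    next
      case False
      then show ?thesis using y y' by (auto simp: cube_def)
    qed
  qed
qed

lemma wt_emb:
  assumes "\<pi> \<in> two_to_one_maps n" "y \<in> cube n"
  shows "wt (emb n \<pi> y) = 2 * wt y"
proof -
  have eq: "{j. emb n \<pi> y j} = (\<Union>k\<in>{k. y k}. {j\<in>{0..<2*n}. \<pi> j = k})"
    by (auto simp: emb_def)
  have "card (\<Union>k\<in>{k. y k}. {j\<in>{0..<2*n}. \<pi> j = k}) = (\<Sum>k\<in>{k. y k}. card {j\<in>{0..<2*n}. \<pi> j = k})"
    by (rule card_UN_disjoint) (auto simp: finite_ones[OF assms(2)])
  also have "\<dots> = (\<Sum>k\<in>{k. y k}. 2)"
    by (rule sum.cong) (use assms ones_sub[OF assms(2)] Pi_fiber in auto)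
  finally show ?thesis unfolding wt_def eq by simp
qed

lemma wt_emb_even: "\<pi> \<in> two_to_one_maps n \<Longrightarrow> x \<in> emb n \<pi> ` cube n \<Longrightarrow> even (wt x)"
  using wt_emb by auto

definition isperm :: "nat \<Rightarrow> (nat \<Rightarrow> nat) \<Rightarrow> bool" where
  "isperm m \<sigma> \<longleftrightarrow> bij_betw \<sigma> {..<m} {..<m} \<and> (\<forall>l\<ge>m. \<sigma> l = l)"

lemma isperm_lt: "isperm m \<sigma> \<Longrightarrow> (\<sigma> j < m) = (j < m)"
  unfolding isperm_def bij_betw_def by (metis image_eqI lessThan_iff not_le)

lemma isperm_surj: "isperm m \<sigma> \<Longrightarrow> \<exists>l. \<sigma> l = j"
proof -
  assume a: "isperm m \<sigma>"
  show ?thesis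
  proof (cases "j < m")
    case True
    then have "j \<in> \<sigma> ` {..<m}" using a unfolding isperm_def bij_betw_def by auto
    then show ?thesis by blast
  next
    case False then show ?thesis by (intro exI[of _ j]) (use a in \<open>auto simp: isperm_def\<close>)
  qed
qed

lemma comp_perm_inj: "isperm m \<sigma> \<Longrightarrow> inj_on (\<lambda>\<pi>. \<pi> \<circ> \<sigma>) A"
proof (rule inj_onI)
  fix \<pi> \<pi>' assume a: "isperm m \<sigma>" and e: "\<pi> \<circ> \<sigma> = \<pi>' \<circ> \<sigma>"
  show "\<pi> = \<pi>'"
  proof
    fix j obtain l where "\<sigma> l = j" using isperm_surj[OF a] by blast
    then show "\<pi> j = \<pi>' j" using fun_cong[OF e, of l] by auto
  qed
qed

lemma perm_Pi:
  assumes s: "isperm (2*n) \<sigma>" and p: "\<pi> \<in> two_to_one_maps n"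
  shows "\<pi> \<circ> \<sigma> \<in> two_to_one_maps n"
proof -
  have "\<pi> \<circ> \<sigma> \<in> {0..<2*n} \<rightarrow>\<^sub>E {0..<n}"
  proof -
    have "\<forall>j\<in>{0..<2*n}. (\<pi> \<circ> \<sigma>) j \<in> {0..<n}" using isperm_lt[OF s] Pi_mem[OF p] by auto
    moreover have "(\<pi> \<circ> \<sigma>) \<in> extensional {0..<2*n}"
      using s p unfolding isperm_def two_to_one_maps_def by (auto simp: extensional_def PiE_iff)
    ultimately show ?thesis by (simp add: PiE_iff)
  qed
  moreover have "card {j\<in>{0..<2*n}. (\<pi> \<circ> \<sigma>) j = k} = 2" if k: "k < n" for k
  proof -
    have inj: "inj_on \<sigma> {j\<in>{0..<2*n}. (\<pi> \<circ> \<sigma>) j = k}"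
      using s unfolding isperm_def bij_betw_def by (auto intro: inj_on_subset)
    have "\<sigma> ` {j\<in>{0..<2*n}. (\<pi> \<circ> \<sigma>) j = k} = {l\<in>{0..<2*n}. \<pi> l = k}"
    proof (intro set_eqI iffI)
      fix l assume "l \<in> \<sigma> ` {j\<in>{0..<2*n}. (\<pi> \<circ> \<sigma>) j = k}"
      then show "l \<in> {l\<in>{0..<2*n}. \<pi> l = k}" using isperm_lt[OF s] by auto
    next
      fix l assume l: "l \<in> {l\<in>{0..<2*n}. \<pi> l = k}"
      obtain j where j: "\<sigma> j = l" using isperm_surj[OF s] by blast
      then have "j < 2*n" using l isperm_lt[OF s, of j] by auto
      then show "l \<in> \<sigma> ` {j\<in>{0..<2*n}. (\<pi> \<circ> \<sigma>) j = k}" using j l by auto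
    qed
    then have "card {j\<in>{0..<2*n}. (\<pi> \<circ> \<sigma>) j = k} = card {l\<in>{0..<2*n}. \<pi> l = k}"
      using card_image[OF inj] by simp
    then show ?thesis using Pi_fiber[OF p k] by simp
  qed
  ultimately show ?thesis by (auto simp: two_to_one_maps_def)
qed

lemma emb_comp: "isperm (2*n) \<sigma> \<Longrightarrow> emb n (\<pi> \<circ> \<sigma>) y = emb n \<pi> y \<circ> \<sigma>"
  by (auto simp: emb_def isperm_lt)

lemma exists_perm:
  assumes x: "x \<in> cube m" and x': "x' \<in> cube m" and w: "wt x = wt x'"
  shows "\<exists>\<sigma>. isperm m \<sigma> \<and> x' = x \<circ> \<sigma>"
proof -
  define A where "A = {j. x j}"
  define A' where "A' = {j. x' j}"
  define B where "B = {..<m} - A"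
  define B' where "B' = {..<m} - A'"
  have sA: "A \<subseteq> {..<m}" "A' \<subseteq> {..<m}" using ones_sub[OF x] ones_sub[OF x'] by (auto simp: A_def A'_def)
  have fA: "finite A" "finite A'" using sA finite_subset by auto
  have cA: "card A' = card A" using w by (simp add: wt_def A_def A'_def)
  have cB: "card B' = card B" using sA cA fA by (simp add: B_def B'_def card_Diff_subset)
  obtain h1 where h1: "bij_betw h1 A' A" using finite_same_card_bij[OF fA(2) fA(1) cA] by blast
  obtain h2 where h2: "bij_betw h2 B' B" using finite_same_card_bij[of B' B] cB by (auto simp: B_def B'_def)
  define \<sigma> where "\<sigma> = (\<lambda>l. if l \<in> A' then h1 l else if l \<in> B' then h2 l else l)"
  have b1: "bij_betw \<sigma> A' A" using h1 by (rule bij_betw_cong[THEN iffD1, rotated]) (auto simp: \<sigma>_def)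
  have b2: "bij_betw \<sigma> B' B" using h2 by (rule bij_betw_cong[THEN iffD1, rotated]) (auto simp: \<sigma>_def B'_def)
  have "bij_betw \<sigma> (A' \<union> B') (A \<union> B)" by (rule bij_betw_combine[OF b1 b2]) (auto simp: B_def)
  moreover have "A' \<union> B' = {..<m}" "A \<union> B = {..<m}" using sA by (auto simp: B_def B'_def)
  ultimately have bij: "bij_betw \<sigma> {..<m} {..<m}" by simp
  have fix_out: "\<forall>l\<ge>m. \<sigma> l = l" using sA by (auto simp: \<sigma>_def B'_def)
  have "x' l = x (\<sigma> l)" for l
  proof (cases "l \<in> A'")
    case True
    then have "\<sigma> l \<in> A" using b1 by (auto simp: bij_betw_def)
    then show ?thesis using True by (simp add: A_def A'_def)
  next
    case False
    show ?thesis
    proof (cases "l \<in> B'")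
      case True
      then have "\<sigma> l \<in> B" using b2 by (auto simp: bij_betw_def)
      then show ?thesis using True False by (simp add: A_def A'_def B_def)
    next
      case F2: False
      then have "l \<ge> m" "\<sigma> l = l" using False by (auto simp: B'_def \<sigma>_def)
      then show ?thesis using x x' by (auto simp: cube_def)
    qed
  qed
  then have "x' = x \<circ> \<sigma>" by (simp add: fun_eq_iff)
  then show ?thesis using bij fix_out by (auto simp: isperm_def)
qed



definition Cset :: "nat \<Rightarrow> (nat \<Rightarrow> bool) \<Rightarrow> (nat \<Rightarrow> nat) set" where
  "Cset n x = {\<pi> \<in> two_to_one_maps n. x \<in> emb n \<pi> ` cube n}"

definition ww :: "real \<Rightarrow> nat \<Rightarrow> (nat \<Rightarrow> bool) \<Rightarrow> real" where
  "ww p n x = p ^ (wt x div 2) * (1-p) ^ (n - wt x div 2)"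

lemma finite_Cset: "finite (Cset n x)"
  unfolding Cset_def by (rule finite_subset[OF _ finite_Pi[of n]]) auto

lemma key:
  fixes \<Phi> :: "(nat \<Rightarrow> bool) \<Rightarrow> (nat \<Rightarrow> nat) \<Rightarrow> real"
  shows "(\<Sum>\<pi>\<in>two_to_one_maps n. \<Sum>y\<in>cube n. mu p n y * \<Phi> (emb n \<pi> y) \<pi>)
       = (\<Sum>x\<in>cube (2*n). ww p n x * (\<Sum>\<pi>\<in>Cset n x. \<Phi> x \<pi>))"
proof -
  have A: "(\<Sum>y\<in>cube n. mu p n y * \<Phi> (emb n \<pi> y) \<pi>)
        = (\<Sum>x\<in>cube (2*n). (if x \<in> emb n \<pi> ` cube n then ww p n x * \<Phi> x \<pi> else 0))"
    if p: "\<pi> \<in> two_to_one_maps n" for \<pi>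
  proof -
    have "(\<Sum>y\<in>cube n. mu p n y * \<Phi> (emb n \<pi> y) \<pi>) = (\<Sum>y\<in>cube n. ww p n (emb n \<pi> y) * \<Phi> (emb n \<pi> y) \<pi>)"
      by (rule sum.cong) (simp_all add: mu_wt wt_emb[OF p] ww_def)
    also have "\<dots> = (\<Sum>x\<in>emb n \<pi> ` cube n. ww p n x * \<Phi> x \<pi>)"
      by (rule sum.reindex[OF emb_inj[OF p], symmetric, unfolded comp_def])
    also have "emb n \<pi> ` cube n = cube (2*n) \<inter> emb n \<pi> ` cube n" using emb_cube by blast
    also have "(\<Sum>x\<in>cube (2*n) \<inter> emb n \<pi> ` cube n. ww p n x * \<Phi> x \<pi>) =
        (\<Sum>x\<in>cube (2*n). (if x \<in> emb n \<pi> ` cube n then ww p n x * \<Phi> x \<pi> else 0))"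
      by (rule sum.inter_restrict[OF finite_cube])
    finally show ?thesis .
  qed
  have "(\<Sum>\<pi>\<in>two_to_one_maps n. \<Sum>y\<in>cube n. mu p n y * \<Phi> (emb n \<pi> y) \<pi>)
     = (\<Sum>\<pi>\<in>two_to_one_maps n. \<Sum>x\<in>cube (2*n). (if x \<in> emb n \<pi> ` cube n then ww p n x * \<Phi> x \<pi> else 0))"
    by (rule sum.cong) (simp_all add: A)
  also have "\<dots> = (\<Sum>x\<in>cube (2*n). \<Sum>\<pi>\<in>two_to_one_maps n. (if x \<in> emb n \<pi> ` cube n then ww p n x * \<Phi> x \<pi> else 0))"
    by (rule sum.swap)
  also have "\<dots> = (\<Sum>x\<in>cube (2*n). \<Sum>\<pi>\<in>Cset n x. ww p n x * \<Phi> x \<pi>)"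
    unfolding Cset_def by (rule sum.cong[OF refl], rule sum.inter_filter[symmetric, OF finite_Pi])
  also have "\<dots> = (\<Sum>x\<in>cube (2*n). ww p n x * (\<Sum>\<pi>\<in>Cset n x. \<Phi> x \<pi>))"
    by (simp add: sum_distrib_left)
  finally show ?thesis .
qed

lemma card_slice: "card {x\<in>cube m. wt x = w} = m choose w"
proof -
  have eq: "{x\<in>cube m. wt x = w} = (\<lambda>S j. j \<in> S) ` {S. S \<subseteq> {..<m} \<and> card S = w}"
  proof (intro set_eqI iffI)
    fix x assume x: "x \<in> {x\<in>cube m. wt x = w}"
    then have "x = (\<lambda>j. j \<in> {j. x j})" "{j. x j} \<in> {S. S \<subseteq> {..<m} \<and> card S = w}"
      using ones_sub[of x m] by (auto simp: wt_def)
    then show "x \<in> (\<lambda>S j. j \<in> S) ` {S. S \<subseteq> {..<m} \<and> card S = w}" by blast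
  next
    fix x assume "x \<in> (\<lambda>S j. j \<in> S) ` {S. S \<subseteq> {..<m} \<and> card S = w}"
    then obtain S where S: "S \<subseteq> {..<m}" "card S = w" "x = (\<lambda>j. j \<in> S)" by blast
    then show "x \<in> {x\<in>cube m. wt x = w}" by (auto simp: cube_def wt_def)
  qed
  have inj: "inj_on (\<lambda>S j. j \<in> S) {S. S \<subseteq> {..<m} \<and> card S = w}"
    by (rule inj_onI) (simp add: fun_eq_iff set_eq_iff)
  show ?thesis unfolding eq card_image[OF inj] by (simp add: n_subsets)
qed

lemma finite_slice: "finite {x\<in>cube m. wt x = w}"
  by (rule finite_subset[OF _ finite_cube]) auto

lemma slice_sum_C:
  "(\<Sum>x\<in>{x\<in>cube (2*n). wt x = 2*k}. card (Cset n x)) = card (two_to_one_maps n) * (n choose k)"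
proof -
  let ?S = "{x\<in>cube (2*n). wt x = 2*k}"
  have "(\<Sum>x\<in>?S. card (Cset n x)) = (\<Sum>x\<in>?S. \<Sum>\<pi>\<in>two_to_one_maps n. if x \<in> emb n \<pi> ` cube n then 1 else 0)"
    unfolding Cset_def by (rule sum.cong[OF refl], subst card_eq_sum, rule sum.inter_filter[OF finite_Pi])
  also have "\<dots> = (\<Sum>\<pi>\<in>two_to_one_maps n. \<Sum>x\<in>?S. if x \<in> emb n \<pi> ` cube n then 1 else 0)"
    by (rule sum.swap)
  also have "\<dots> = (\<Sum>\<pi>\<in>two_to_one_maps n. n choose k)"
  proof (rule sum.cong[OF refl])
    fix \<pi> assume p: "\<pi> \<in> two_to_one_maps n"
    have "(\<Sum>x\<in>?S. if x \<in> emb n \<pi> ` cube n then 1 else 0) = card (?S \<inter> emb n \<pi> ` cube n)"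
      by (subst card_eq_sum, rule sum.inter_restrict[OF finite_slice, symmetric])
    also have "?S \<inter> emb n \<pi> ` cube n = emb n \<pi> ` {y\<in>cube n. wt y = k}"
    proof (intro set_eqI iffI)
      fix x assume "x \<in> ?S \<inter> emb n \<pi> ` cube n"
      then obtain y where "y \<in> cube n" "x = emb n \<pi> y" "wt x = 2*k" by auto
      then show "x \<in> emb n \<pi> ` {y\<in>cube n. wt y = k}" using wt_emb[OF p] by auto
    next
      fix x assume "x \<in> emb n \<pi> ` {y\<in>cube n. wt y = k}"
      then obtain y where "y \<in> cube n" "x = emb n \<pi> y" "wt y = k" by auto
      then show "x \<in> ?S \<inter> emb n \<pi> ` cube n" using wt_emb[OF p] emb_cube by auto
    qed
    also have "card (emb n \<pi> ` {y\<in>cube n. wt y = k}) = card {y\<in>cube n. wt y = k}"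
      by (rule card_image) (rule inj_on_subset[OF emb_inj[OF p]], auto)
    finally show "(\<Sum>x\<in>?S. if x \<in> emb n \<pi> ` cube n then 1 else 0) = n choose k"
      by (simp add: card_slice)
  qed
  finally show ?thesis by simp
qed

lemma C_le:
  assumes x: "x \<in> cube (2*n)" and x': "x' \<in> cube (2*n)" and w: "wt x = wt x'"
  shows "card (Cset n x) \<le> card (Cset n x')"
proof -
  obtain \<sigma> where s: "isperm (2*n) \<sigma>" and e: "x' = x \<circ> \<sigma>" using exists_perm[OF x x' w] by blast
  have "(\<lambda>\<pi>. \<pi> \<circ> \<sigma>) ` Cset n x \<subseteq> Cset n x'"
  proof
    fix \<pi>' assume "\<pi>' \<in> (\<lambda>\<pi>. \<pi> \<circ> \<sigma>) ` Cset n x"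
    then obtain \<pi> y where p: "\<pi> \<in> two_to_one_maps n" and y: "y \<in> cube n" "x = emb n \<pi> y" and pp: "\<pi>' = \<pi> \<circ> \<sigma>"
      by (auto simp: Cset_def)
    have "x' = emb n \<pi>' y" using e y pp emb_comp[OF s] by simp
    then show "\<pi>' \<in> Cset n x'" using perm_Pi[OF s p] pp y by (auto simp: Cset_def)
  qed
  then show ?thesis by (rule card_inj_on_le[OF comp_perm_inj[OF s] _ finite_Cset])
qed

lemma C_const:
  "x \<in> cube (2*n) \<Longrightarrow> x' \<in> cube (2*n) \<Longrightarrow> wt x = wt x' \<Longrightarrow> card (Cset n x) = card (Cset n x')"
  using C_le[of x n x'] C_le[of x' n x] by simp

lemma C_formula:
  assumes x: "x \<in> cube (2*n)" and w: "wt x = 2*k"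
  shows "card (Cset n x) * ((2*n) choose (2*k)) = card (two_to_one_maps n) * (n choose k)"
proof -
  let ?S = "{x\<in>cube (2*n). wt x = 2*k}"
  have c: "card (Cset n x') = card (Cset n x)" if "x' \<in> ?S" for x'
    using that C_const[of x' n x] x w by simp
  have "(\<Sum>x'\<in>?S. card (Cset n x')) = (\<Sum>x'\<in>?S. card (Cset n x))"
    by (rule sum.cong[OF refl]) (rule c)
  also have "\<dots> = card ?S * card (Cset n x)" by simp
  finally have "card ?S * card (Cset n x) = card (two_to_one_maps n) * (n choose k)"
    using slice_sum_C[of n k] by simp
  then show ?thesis by (simp only: card_slice mult.commute)
qed

lemma C_odd: "odd (wt x) \<Longrightarrow> Cset n x = {}"
proof -
  assume o: "odd (wt x)"
  have "\<pi> \<notin> Cset n x" for \<pi>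
  proof
    assume "\<pi> \<in> Cset n x"
    then have "even (wt x)" unfolding Cset_def by (auto intro: wt_emb_even)
    then show False using o by simp
  qed
  then show ?thesis by blast
qed

definition Mset :: "nat \<Rightarrow> nat \<Rightarrow> (nat \<Rightarrow> bool) \<Rightarrow> nat set" where
  "Mset n i x = {j\<in>{..<2*n}. j \<noteq> i \<and> x j = x i}"

definition Pset :: "nat \<Rightarrow> nat \<Rightarrow> (nat \<Rightarrow> bool) \<Rightarrow> nat \<Rightarrow> (nat \<Rightarrow> nat) set" where
  "Pset n i x j = {\<pi>\<in>Cset n x. \<pi> j = \<pi> i}"

lemma partner:
  assumes p: "\<pi> \<in> two_to_one_maps n" and i: "i < 2*n" and x: "x \<in> emb n \<pi> ` cube n"
  shows "\<exists>j. {j'\<in>Mset n i x. \<pi> j' = \<pi> i} = {j} \<and> j \<noteq> i \<and> j < 2*n \<and> (\<forall>l<2*n. \<pi> l = \<pi> i \<longleftrightarrow> l = i \<or> l = j)"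
proof -
  define F where "F = {l\<in>{0..<2*n}. \<pi> l = \<pi> i}"
  have "card F = 2" unfolding F_def using Pi_fiber[OF p Pi_mem[OF p i]] .
  then obtain a b where ab: "F = {a,b}" "a \<noteq> b" unfolding card_2_iff by blast
  have iF: "i \<in> F" using i by (simp add: F_def)
  obtain j where F': "F = {i,j}" "j \<noteq> i"
  proof (cases "i = a")
    case True then show ?thesis using that ab by blast
  next
    case False then have "i = b" using iF ab by blast
    then show ?thesis using that ab by blast
  qed
  have "j \<in> F" using F' by blast
  then have j: "j < 2*n" "\<pi> j = \<pi> i" by (simp_all add: F_def)
  obtain y where y: "x = emb n \<pi> y" using x by blast
  have xj: "x j = x i" using j i y by (simp add: emb_def)
  have all: "\<pi> l = \<pi> i \<longleftrightarrow> l = i \<or> l = j" if "l < 2*n" for l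
  proof -
    have "\<pi> l = \<pi> i \<longleftrightarrow> l \<in> F" using that by (simp add: F_def)
    then show ?thesis using F'(1) by simp
  qed
  have "{j'\<in>Mset n i x. \<pi> j' = \<pi> i} = {j}"
  proof (intro set_eqI iffI)
    fix l assume "l \<in> {j'\<in>Mset n i x. \<pi> j' = \<pi> i}"
    then have "l < 2*n" "l \<noteq> i" "\<pi> l = \<pi> i" by (simp_all add: Mset_def)
    then show "l \<in> {j}" using all by auto
  next
    fix l assume "l \<in> {j}"
    then show "l \<in> {j'\<in>Mset n i x. \<pi> j' = \<pi> i}" using j F'(2) xj by (simp add: Mset_def)
  qed
  then show ?thesis using all F'(2) j by blast
qed

definition tr :: "nat \<Rightarrow> nat \<Rightarrow> nat \<Rightarrow> nat" where
  "tr a b l = (if l = a then b else if l = b then a else l)"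

lemma tr_perm: "a < m \<Longrightarrow> b < m \<Longrightarrow> isperm m (tr a b)"
proof -
  assume ab: "a < m" "b < m"
  have inv: "tr a b (tr a b l) = l" for l by (auto simp: tr_def)
  have "inj_on (tr a b) {..<m}" by (metis inv inj_on_inverseI)
  moreover have "tr a b ` {..<m} = {..<m}"
  proof
    show "tr a b ` {..<m} \<subseteq> {..<m}" using ab by (auto simp: tr_def)
    show "{..<m} \<subseteq> tr a b ` {..<m}"
    proof
      fix l assume "l \<in> {..<m}"
      moreover have "tr a b l \<in> {..<m}" using ab \<open>l \<in> {..<m}\<close> by (auto simp: tr_def)
      ultimately show "l \<in> tr a b ` {..<m}" by (metis inv image_eqI)
    qed
  qed
  ultimately show ?thesis using ab by (auto simp: isperm_def bij_betw_def tr_def)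
qed

lemma P_le:
  assumes i: "i < 2*n" and j: "j \<in> Mset n i x" and j': "j' \<in> Mset n i x"
  shows "card (Pset n i x j) \<le> card (Pset n i x j')"
proof -
  have jj: "j < 2*n" "j' < 2*n" "j \<noteq> i" "j' \<noteq> i" "x j = x i" "x j' = x i" using j j' by (auto simp: Mset_def)
  have s: "isperm (2*n) (tr j j')" using jj by (intro tr_perm) auto
  have xt: "x \<circ> tr j j' = x" using jj by (auto simp: tr_def fun_eq_iff)
  have "(\<lambda>\<pi>. \<pi> \<circ> tr j j') ` Pset n i x j \<subseteq> Pset n i x j'"
  proof
    fix \<pi>' assume "\<pi>' \<in> (\<lambda>\<pi>. \<pi> \<circ> tr j j') ` Pset n i x j"
    then obtain \<pi> y where p: "\<pi> \<in> two_to_one_maps n" and y: "y \<in> cube n" "x = emb n \<pi> y"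
      and pj: "\<pi> j = \<pi> i" and pp: "\<pi>' = \<pi> \<circ> tr j j'"
      by (auto simp: Pset_def Cset_def)
    have "x = emb n \<pi>' y" using xt y pp emb_comp[OF s] by simp
    moreover have "\<pi>' j' = \<pi>' i" using pp pj jj by (auto simp: tr_def)
    ultimately show "\<pi>' \<in> Pset n i x j'" using perm_Pi[OF s p] pp y by (auto simp: Pset_def Cset_def)
  qed
  moreover have "finite (Pset n i x j')" unfolding Pset_def using finite_Cset by auto
  ultimately show ?thesis by (rule card_inj_on_le[OF comp_perm_inj[OF s]])
qed

lemma P_const:
  "i < 2*n \<Longrightarrow> j \<in> Mset n i x \<Longrightarrow> j' \<in> Mset n i x \<Longrightarrow> card (Pset n i x j) = card (Pset n i x j')"
  using P_le[of i n j x j'] P_le[of i n j' x j] by simp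

lemma finite_Mset: "finite (Mset n i x)"
  by (simp add: Mset_def)

lemma P_sum:
  assumes i: "i < 2*n"
  shows "(\<Sum>j\<in>Mset n i x. card (Pset n i x j)) = card (Cset n x)"
proof -
  have "(\<Sum>j\<in>Mset n i x. card (Pset n i x j)) = (\<Sum>j\<in>Mset n i x. \<Sum>\<pi>\<in>Cset n x. if \<pi> j = \<pi> i then 1 else 0)"
    unfolding Pset_def by (rule sum.cong[OF refl], subst card_eq_sum, rule sum.inter_filter[OF finite_Cset])
  also have "\<dots> = (\<Sum>\<pi>\<in>Cset n x. \<Sum>j\<in>Mset n i x. if \<pi> j = \<pi> i then 1 else 0)"
    by (rule sum.swap)
  also have "\<dots> = (\<Sum>\<pi>\<in>Cset n x. 1)"
  proof (rule sum.cong[OF refl])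
    fix \<pi> assume "\<pi> \<in> Cset n x"
    then have p: "\<pi> \<in> two_to_one_maps n" and x: "x \<in> emb n \<pi> ` cube n" by (auto simp: Cset_def)
    obtain j where "{j'\<in>Mset n i x. \<pi> j' = \<pi> i} = {j}" using partner[OF p i x] by blast
    then have "card {j'\<in>Mset n i x. \<pi> j' = \<pi> i} = 1" by simp
    moreover have "card {j'\<in>Mset n i x. \<pi> j' = \<pi> i} = (\<Sum>j\<in>Mset n i x. if \<pi> j = \<pi> i then 1 else 0)"
      by (subst card_eq_sum, rule sum.inter_filter[OF finite_Mset])
    ultimately show "(\<Sum>j\<in>Mset n i x. if \<pi> j = \<pi> i then 1 else 0) = (1::nat)" by simp
  qed
  finally show ?thesis by simp
qed



definition gk :: "real \<Rightarrow> nat \<Rightarrow> nat \<Rightarrow> real" where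
  "gk p n k = real (n choose k) / (real ((2*n) choose (2*k)) * p^k * (1-p)^(n-k))"

lemma binom_step: "(n choose Suc k) * Suc k = (n choose k) * (n - k)"
  using binomial_absorption[of k n] binomial_absorb_comp[of n k] by (simp add: mult.commute)

lemma gk_pos: "0 < p \<Longrightarrow> p < 1 \<Longrightarrow> k \<le> n \<Longrightarrow> 0 < gk p n k"
  unfolding gk_def by (intro divide_pos_pos mult_pos_pos) auto

lemma gen_ratio:
  fixes a b K M p P Q :: real
  assumes "0<a" "0<b" "0 \<le> K" "0 \<le> M" "0<p" "p<1" "0<P" "0<Q"
  shows "(a*(M+1)/(K+1)) / ((b*(2*M+2)*(2*M+1)/((2*K+1)*(2*K+2))) * (p*P) * Q) = a/(b*P*((1-p)*Q)) * ((2*K+1)*(1-p)/((2*M+1)*p))"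
proof -
  have l: "(a*(M+1)/(K+1)) / ((b*(2*M+2)*(2*M+1)/((2*K+1)*(2*K+2))) * (p*P) * Q) = (a*(2*K+1)) / (b*(2*M+1)*p*P*Q)"
    using assms by (simp add: divide_simps) (simp add: algebra_simps)
  have r: "a/(b*P*((1-p)*Q)) * ((2*K+1)*(1-p)/((2*M+1)*p)) = (a*(2*K+1)) / (b*(2*M+1)*p*P*Q)"
    using assms by (simp add: divide_simps)
  show ?thesis using l r by simp
qed

lemma gk_step:
  assumes p: "0 < p" "p < 1" and k: "k < n"
  shows "gk p n (Suc k) = gk p n k * ((2 * real k + 1) * (1-p) / ((2 * real n - 2 * real k - 1) * p))"
proof -
  obtain m where n: "n = k + 1 + m" using k by (metis add.commute less_imp_Suc_add add_Suc_right Suc_eq_plus1)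
  define a where "a = real (n choose k)"
  define a' where "a' = real (n choose Suc k)"
  define b where "b = real ((2*n) choose (2*k))"
  define b1 where "b1 = real ((2*n) choose Suc (2*k))"
  define b' where "b' = real ((2*n) choose Suc (Suc (2*k)))"
  have nk: "n - k = Suc m" "2*n - 2*k = Suc (Suc (2*m))" "2*n - Suc (2*k) = Suc (2*m)" "n - Suc k = m"
    using n by simp_all
  have e1: "a' * (real k + 1) = a * (real m + 1)"
  proof -
    have "real ((n choose Suc k) * Suc k) = real ((n choose k) * (n - k))" by (simp only: binom_step)
    then show ?thesis unfolding a_def a'_def nk by (simp only: of_nat_mult of_nat_Suc) (simp add: algebra_simps)
  qed
  have e2: "b1 * (2 * real k + 1) = b * (2 * real m + 2)"
  proof -
    have "real (((2*n) choose Suc (2*k)) * Suc (2*k)) = real (((2*n) choose (2*k)) * (2*n - 2*k))" by (simp only: binom_step)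
    then show ?thesis unfolding b_def b1_def nk by (simp only: of_nat_mult of_nat_Suc) (simp add: algebra_simps)
  qed
  have e3: "b' * (2 * real k + 2) = b1 * (2 * real m + 1)"
  proof -
    have "real (((2*n) choose Suc (Suc (2*k))) * Suc (Suc (2*k))) = real (((2*n) choose Suc (2*k)) * (2*n - Suc (2*k)))" by (simp only: binom_step)
    then show ?thesis unfolding b1_def b'_def nk by (simp only: of_nat_mult of_nat_Suc) (simp add: algebra_simps)
  qed
  have bpos: "0 < b" unfolding b_def using k by (simp add: zero_less_binomial_iff)
  have apos: "0 < a" unfolding a_def using k by (simp add: zero_less_binomial_iff)
  have A': "a' = a * (real m + 1) / (real k + 1)" using e1 by (simp add: field_simps)
  have B1: "b1 = b * (2 * real m + 2) / (2 * real k + 1)" using e2 by (simp add: field_simps)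
  have B': "b' = b * (2 * real m + 2) * (2 * real m + 1) / ((2 * real k + 1) * (2 * real k + 2))"
  proof -
    have "b' = b1 * (2 * real m + 1) / (2 * real k + 2)" using e3 by (simp add: field_simps)
    then show ?thesis unfolding B1 by (simp add: field_simps)
  qed
  have g1: "gk p n (Suc k) = a' / (b' * p^(Suc k) * (1-p)^m)"
    unfolding gk_def a'_def b'_def nk by simp
  have g0: "gk p n k = a / (b * p^k * (1-p)^(Suc m))"
    unfolding gk_def a_def b_def nk by simp
  have rn: "2 * real n - 2 * real k - 1 = 2 * real m + 1" unfolding n by simp
  have q: "0 < 1 - p" using p by simp
  have pos: "0 < 2 * real m + 1" "0 < real k + 1" "0 < 2 * real k + 1" "0 < 2 * real k + 2" "0 < 2 * real m + 2"
    "0 < p^k" "0 < (1-p)^m" using p q by auto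
  show ?thesis unfolding g1 g0 rn A' B' power_Suc
    by (rule gen_ratio) (use p q apos bpos pos in auto)
qed


definition kc :: "real \<Rightarrow> nat \<Rightarrow> nat" where "kc p n = nat \<lfloor>real n * p + 1/2\<rfloor>"

definition rr :: "real \<Rightarrow> nat \<Rightarrow> nat \<Rightarrow> real" where
  "rr p n k = (2 * real k + 1) * (1-p) / ((2 * real n - 2 * real k - 1) * p)"

lemma kc_props:
  assumes "0 < p" "p < 1"
  shows "kc p n \<le> n" "real (kc p n) \<le> real n * p + 1/2" "real (kc p n) > real n * p - 1/2"
proof -
  have np: "0 \<le> real n * p" "real n * p \<le> real n" using assms by (auto simp: mult_left_le)
  have f: "\<lfloor>real n * p + 1/2\<rfloor> \<ge> 0" using np by simp
  have r: "real (kc p n) = real_of_int \<lfloor>real n * p + 1/2\<rfloor>" unfolding kc_def using f by simp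
  show "real (kc p n) \<le> real n * p + 1/2" unfolding r by linarith
  show "real (kc p n) > real n * p - 1/2" unfolding r by linarith
  have "real (kc p n) < real n + 1" using \<open>real (kc p n) \<le> real n * p + 1/2\<close> np assms
  proof -
    have "real n * p < real n + 1/2" using np by linarith
    then show ?thesis using \<open>real (kc p n) \<le> real n * p + 1/2\<close> by linarith
  qed
  then show "kc p n \<le> n" by linarith
qed

lemma gk_step_rr: "0 < p \<Longrightarrow> p < 1 \<Longrightarrow> k < n \<Longrightarrow> gk p n (Suc k) = gk p n k * rr p n k"
  unfolding rr_def by (rule gk_step)

lemma rr_ge1:
  assumes p: "0 < p" "p < 1" and k: "kc p n \<le> k" "k < n"
  shows "1 \<le> rr p n k"
proof -
  have d: "0 < 2 * real n - 2 * real k - 1" using k by linarith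
  have "real k > real n * p - 1/2" using kc_props(3)[OF p, of n] k by linarith
  then have "(2 * real n - 2 * real k - 1) * p \<le> (2 * real k + 1) * (1-p)"
    by (simp add: algebra_simps)
  then show ?thesis unfolding rr_def using d p by (simp add: divide_simps)
qed

lemma rr_le1:
  assumes p: "0 < p" "p < 1" and k: "Suc k \<le> kc p n" "k < n"
  shows "rr p n k \<le> 1"
proof -
  have d: "0 < 2 * real n - 2 * real k - 1" using k by linarith
  have "real k + 1 \<le> real n * p + 1/2" using kc_props(2)[OF p, of n] k by linarith
  then have "(2 * real k + 1) * (1-p) \<le> (2 * real n - 2 * real k - 1) * p"
    by (simp add: algebra_simps)
  then show ?thesis unfolding rr_def using d p by (simp add: divide_simps)
qed

lemma gk_up_mono:
  assumes p: "0 < p" "p < 1"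
  shows "kc p n + d \<le> n \<Longrightarrow> gk p n (kc p n) \<le> gk p n (kc p n + d)"
proof (induction d)
  case 0 then show ?case by simp
next
  case (Suc d)
  have "gk p n (kc p n + Suc d) = gk p n (kc p n + d) * rr p n (kc p n + d)"
    using gk_step_rr[OF p, of "kc p n + d" n] Suc.prems by simp
  moreover have "1 \<le> rr p n (kc p n + d)" using rr_ge1[OF p] Suc.prems by simp
  moreover have "0 < gk p n (kc p n + d)" using gk_pos[OF p] Suc.prems by simp
  ultimately have "gk p n (kc p n + d) \<le> gk p n (kc p n + Suc d)"
    by (metis mult_le_cancel_left1 less_le_not_le)
  then show ?case using Suc by simp
qed

lemma gk_down_mono:
  assumes p: "0 < p" "p < 1"
  shows "d \<le> kc p n \<Longrightarrow> gk p n (kc p n) \<le> gk p n (kc p n - d)"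
proof (induction d)
  case 0 then show ?case by simp
next
  case (Suc d)
  let ?k = "kc p n - Suc d"
  have kn: "kc p n \<le> n" using kc_props(1)[OF p] .
  have sk: "Suc ?k = kc p n - d" using Suc.prems by simp
  have "gk p n (Suc ?k) = gk p n ?k * rr p n ?k"
    using gk_step_rr[OF p, of ?k n] Suc.prems kn by simp
  moreover have "rr p n ?k \<le> 1" using rr_le1[OF p, of ?k n] Suc.prems kn by simp
  moreover have "0 < gk p n ?k" using gk_pos[OF p] Suc.prems kn by simp
  ultimately have "gk p n (Suc ?k) \<le> gk p n ?k"
    by (metis mult_le_cancel_left1 less_le_not_le mult.commute mult_left_le)
  then show ?case using Suc sk by simp
qed

lemma gk_min:
  assumes p: "0 < p" "p < 1" and k: "k \<le> n"
  shows "gk p n (kc p n) \<le> gk p n k"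
proof (cases "kc p n \<le> k")
  case True
  then show ?thesis using gk_up_mono[OF p, of n "k - kc p n"] k by simp
next
  case False
  then show ?thesis using gk_down_mono[OF p, of "kc p n - k" n] by simp
qed


lemma pq_ge:
  fixes lam p :: real
  assumes "0 < lam" "lam < 1/2" "lam < p" "p < 1 - lam"
  shows "lam/2 \<le> p * (1-p)"
proof -
  have "0 \<le> (p - lam) * (1 - lam - p)" using assms by (intro mult_nonneg_nonneg) auto
  then have "lam - lam*lam \<le> p * (1-p)" by (simp add: algebra_simps)
  moreover have "lam * lam \<le> lam / 2" using assms by (simp add: algebra_simps)
  ultimately show ?thesis by linarith
qed

lemma D_lower:
  fixes K :: real
  assumes lam: "0 < lam" "lam < 1/2" "lam < p" "p < 1 - lam" and L: "0 < L" "L \<le> real n * lam / 4"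
    and k: "2 * K + 1 \<le> 2 * real n * p + 2 * L"
  shows "real n * lam / 2 \<le> (2 * real n - 2 * K - 1) * p"
proof -
  have p: "0 < p" "p < 1" using lam by auto
  have "(2 * K + 1) * p \<le> (2 * real n * p + 2 * L) * p" using k p by (simp add: mult_right_mono)
  also have "\<dots> = 2 * (real n * (p * p)) + 2 * L * p" by (simp add: algebra_simps)
  also have "\<dots> \<le> 2 * (real n * (p * p)) + 2 * L" using L p by simp
  finally have a: "(2 * K + 1) * p \<le> 2 * (real n * (p * p)) + 2 * L" .
  have b: "real n * lam / 2 \<le> real n * (p * (1-p))" using mult_left_mono[OF pq_ge[OF lam], of "real n"] by simp
  have c1: "(2 * real n - 2 * K - 1) * p = 2 * (real n * p) - (2 * K + 1) * p" by (simp add: algebra_simps)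
  have c2: "real n * (p * (1-p)) = real n * p - real n * (p * p)" by (simp add: algebra_simps)
  have c3: "real n * lam / 2 = (real n * lam) / 2" by simp
  show ?thesis unfolding c1 using a b c2 L by linarith
qed

lemma D_lower2:
  fixes K :: real
  assumes lam: "0 < lam" "lam < 1/2" "lam < p" "p < 1 - lam" and L: "0 < L" "L \<le> real n * lam / 4"
    and k: "2 * real n * p - 2 * L \<le> 2 * K + 1"
  shows "real n * lam / 2 \<le> (2 * K + 1) * (1-p)"
proof -
  have lam': "0 < lam" "lam < 1/2" "lam < 1-p" "1-p < 1 - lam" using lam by auto
  have k': "2 * (real n - K - 1) + 1 \<le> 2 * real n * (1-p) + 2 * L" using k by (simp add: algebra_simps)
  have "real n * lam / 2 \<le> (2 * real n - 2 * (real n - K - 1) - 1) * (1-p)"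
    by (rule D_lower[OF lam' L k'])
  then show ?thesis by (simp add: algebra_simps)
qed

lemma rr_up:
  assumes lam: "0 < lam" "lam < 1/2" "lam < p" "p < 1 - lam" and L: "0 < L" "L \<le> real n * lam / 4"
    and k: "k < n" "real k + 1 \<le> real n * p + L"
  shows "rr p n k \<le> 1 + 4 * L / (real n * lam)"
proof -
  have p: "0 < p" "p < 1" using lam by auto
  have "0 < real n * lam" using L by linarith
  then have n: "0 < real n" using lam by (simp add: zero_less_mult_iff)
  define D where "D = (2 * real n - 2 * real k - 1) * p"
  have DL: "real n * lam / 2 \<le> D" unfolding D_def by (rule D_lower[OF lam L]) (use k in linarith)
  have Dpos: "0 < D" using DL n lam by (smt (verit) divide_pos_pos mult_pos_pos)
  have u: "(2 * real k + 1) * (1-p) - D \<le> 2 * L" unfolding D_def using k by (simp add: algebra_simps)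
  have "2 * L = 4 * L / (real n * lam) * (real n * lam / 2)" using n lam by (simp add: field_simps)
  also have "\<dots> \<le> 4 * L / (real n * lam) * D" using DL L n lam by (intro mult_left_mono) auto
  finally have "(2 * real k + 1) * (1-p) \<le> (1 + 4 * L / (real n * lam)) * D" using u by (simp add: algebra_simps)
  then show ?thesis unfolding rr_def D_def[symmetric] using Dpos by (simp add: divide_simps)
qed

lemma rr_down:
  assumes lam: "0 < lam" "lam < 1/2" "lam < p" "p < 1 - lam" and L: "0 < L" "L \<le> real n * lam / 4"
    and k: "k < n" "real n * p - L \<le> real k"
  shows "1 \<le> (1 + 4 * L / (real n * lam)) * rr p n k"
proof -
  have p: "0 < p" "p < 1" using lam by auto
  have "0 < real n * lam" using L by linarith
  then have n: "0 < real n" using lam by (simp add: zero_less_mult_iff)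
  define D where "D = (2 * real n - 2 * real k - 1) * p"
  define E where "E = (2 * real k + 1) * (1-p)"
  have Dpos: "0 < D" unfolding D_def using k p by simp
  have EL: "real n * lam / 2 \<le> E" unfolding E_def by (rule D_lower2[OF lam L]) (use k in linarith)
  have u: "D - E \<le> 2 * L" unfolding D_def E_def using k by (simp add: algebra_simps)
  have "2 * L = 4 * L / (real n * lam) * (real n * lam / 2)" using n lam by (simp add: field_simps)
  also have "\<dots> \<le> 4 * L / (real n * lam) * E" using EL L n lam by (intro mult_left_mono) auto
  finally have "D \<le> (1 + 4 * L / (real n * lam)) * E" using u by (simp add: algebra_simps)
  then have "1 \<le> ((1 + 4 * L / (real n * lam)) * E) / D" using le_divide_eq_1_pos[OF Dpos] by blast
  moreover have "rr p n k = E / D" unfolding rr_def D_def E_def ..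
  ultimately show ?thesis by simp
qed


lemma pow_exp_bound:
  fixes e :: real
  assumes "0 \<le> e" "real d \<le> B"
  shows "(1 + e) ^ d \<le> exp (e * B)"
proof -
  have "(1 + e) ^ d \<le> exp e ^ d" using assms by (intro power_mono) (auto simp: add.commute)
  also have "\<dots> = exp (real d * e)" by (simp add: exp_of_nat_mult)
  also have "\<dots> \<le> exp (e * B)" using mult_right_mono[OF assms(2) assms(1)] by (simp add: mult.commute)
  finally show ?thesis .
qed

lemma gk_window:
  assumes lam: "0 < lam" "lam < 1/2" "lam < p" "p < 1 - lam" and L: "1 \<le> L" "L \<le> real n * lam / 4"
    and k: "k \<le> n" "\<bar>real k - real n * p\<bar> \<le> L"
  shows "gk p n k \<le> gk p n (kc p n) * exp (8 * L^2 / (real n * lam))"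
proof -
  have p: "0 < p" "p < 1" using lam by auto
  have L0: "0 < L" using L by simp
  have "0 < real n * lam" using L by linarith
  then have n: "0 < real n" using lam by (simp add: zero_less_mult_iff)
  define eps where "eps = 4 * L / (real n * lam)"
  have eps0: "0 \<le> eps" unfolding eps_def using L0 n lam by simp
  have kcn: "kc p n \<le> n" using kc_props(1)[OF p] .
  have kc1: "real (kc p n) \<le> real n * p + 1/2" "real (kc p n) > real n * p - 1/2" using kc_props(2,3)[OF p] by auto
  have up: "kc p n + d \<le> n \<longrightarrow> real (kc p n + d) \<le> real n * p + L \<longrightarrow> gk p n (kc p n + d) \<le> gk p n (kc p n) * (1+eps)^d" for d
  proof (induction d)
    case 0 then show ?case by simp
  next
    case (Suc d)
    show ?case
    proof (intro impI)
      assume a: "kc p n + Suc d \<le> n" "real (kc p n + Suc d) \<le> real n * p + L"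
      let ?k = "kc p n + d"
      have IH: "gk p n ?k \<le> gk p n (kc p n) * (1+eps)^d" using Suc.IH a by simp
      have "gk p n (Suc ?k) = gk p n ?k * rr p n ?k" using gk_step_rr[OF p, of ?k n] a by simp
      also have "\<dots> \<le> gk p n ?k * (1 + eps)"
        unfolding eps_def using rr_up[OF lam L0 L(2), of ?k] a gk_pos[OF p, of ?k n]
        by (intro mult_left_mono) auto
      also have "\<dots> \<le> gk p n (kc p n) * (1+eps)^d * (1 + eps)" using IH eps0 by (intro mult_right_mono) auto
      finally show "gk p n (kc p n + Suc d) \<le> gk p n (kc p n) * (1+eps)^Suc d" by (simp add: mult_ac)
    qed
  qed
  have down: "d \<le> kc p n \<longrightarrow> real n * p - L \<le> real (kc p n - d) \<longrightarrow> gk p n (kc p n - d) \<le> gk p n (kc p n) * (1+eps)^d" for d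
  proof (induction d)
    case 0 then show ?case by simp
  next
    case (Suc d)
    show ?case
    proof (intro impI)
      assume a: "Suc d \<le> kc p n" "real n * p - L \<le> real (kc p n - Suc d)"
      let ?k = "kc p n - Suc d"
      have sk: "Suc ?k = kc p n - d" using a by simp
      have a2: "real n * p - L \<le> real (kc p n - d)" using a sk by simp
      have IH: "gk p n (Suc ?k) \<le> gk p n (kc p n) * (1+eps)^d" using Suc.IH a a2 sk by simp
      have kn: "?k < n" using a kcn by simp
      have g: "gk p n (Suc ?k) = gk p n ?k * rr p n ?k" using gk_step_rr[OF p kn] .
      have r: "1 \<le> (1 + eps) * rr p n ?k" unfolding eps_def using rr_down[OF lam L0 L(2) kn] a by simp
      have "gk p n ?k \<le> gk p n ?k * ((1 + eps) * rr p n ?k)"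
        using r gk_pos[OF p, of ?k n] kn by (simp add: mult_le_cancel_left1)
      also have "\<dots> = (1 + eps) * gk p n (Suc ?k)" unfolding g by (simp add: mult_ac)
      also have "\<dots> \<le> (1 + eps) * (gk p n (kc p n) * (1+eps)^d)" using IH eps0 by (intro mult_left_mono) auto
      finally show "gk p n (kc p n - Suc d) \<le> gk p n (kc p n) * (1+eps)^Suc d" by (simp add: mult_ac)
    qed
  qed
  have gc: "0 \<le> gk p n (kc p n)" using gk_pos[OF p kcn] by simp
  obtain d where d: "gk p n k \<le> gk p n (kc p n) * (1+eps)^d" "real d \<le> 2 * L"
  proof (cases "kc p n \<le> k")
    case True
    then have "gk p n k \<le> gk p n (kc p n) * (1+eps)^(k - kc p n)"
      using up[of "k - kc p n"] k by simp
    moreover have "real (k - kc p n) \<le> 2 * L" using True k kc1 L by (simp add: of_nat_diff) 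
    ultimately show ?thesis using that by blast
  next
    case False
    then have "gk p n k \<le> gk p n (kc p n) * (1+eps)^(kc p n - k)"
      using down[of "kc p n - k"] k by simp
    moreover have "real (kc p n - k) \<le> 2 * L" using False k kc1 L by (simp add: of_nat_diff)
    ultimately show ?thesis using that by blast
  qed
  have "(1+eps)^d \<le> exp (eps * (2 * L))" by (rule pow_exp_bound[OF eps0 d(2)])
  also have "eps * (2 * L) = 8 * L^2 / (real n * lam)" unfolding eps_def by (simp add: power2_eq_square)
  finally have "(1+eps)^d \<le> exp (8 * L^2 / (real n * lam))" .
  then have "gk p n (kc p n) * (1+eps)^d \<le> gk p n (kc p n) * exp (8 * L^2 / (real n * lam))"
    using gc by (rule mult_left_mono)
  then show ?thesis using d(1) by linarith
qed



definition Dm :: "real \<Rightarrow> nat \<Rightarrow> (nat \<Rightarrow> bool) \<Rightarrow> real" where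
  "Dm p n x = (if even (wt x) then gk p n (wt x div 2) * mu p (2*n) x else 0)"

lemma D_eq:
  assumes p: "0 < p" "p < 1" and x: "x \<in> cube (2*n)"
  shows "real (card (Cset n x)) * ww p n x = real (card (two_to_one_maps n)) * Dm p n x"
proof (cases "even (wt x)")
  case False
  then show ?thesis using C_odd[OF False] by (simp add: Dm_def)
next
  case True
  define k where "k = wt x div 2"
  have w: "wt x = 2*k" using True by (simp add: k_def)
  have kn: "k \<le> n" using wt_le[OF x] w by simp
  define N where "N = real (card (two_to_one_maps n))"
  define C where "C = real (card (Cset n x))"
  define a where "a = real (n choose k)"
  define b where "b = real ((2*n) choose (2*k))"
  have bpos: "0 < b" unfolding b_def using kn by (simp add: zero_less_binomial_iff)
  have CF: "C * b = N * a" unfolding C_def b_def N_def a_def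
    using C_formula[OF x w] by (metis of_nat_mult)
  have ww: "ww p n x = p^k * (1-p)^(n-k)" unfolding ww_def k_def ..
  have mu: "mu p (2*n) x = p^k * p^k * ((1-p)^(n-k) * (1-p)^(n-k))"
  proof -
    have "mu p (2*n) x = p^(2*k) * (1-p)^(2*n - 2*k)" using mu_wt[OF x] w by simp
    moreover have "2*n - 2*k = (n-k) + (n-k)" using kn by simp
    ultimately show ?thesis by (simp add: power_add mult_2)
  qed
  have D: "Dm p n x = a / (b * p^k * (1-p)^(n-k)) * mu p (2*n) x"
    unfolding Dm_def gk_def using True by (simp add: k_def[symmetric] a_def b_def)
  have pk: "0 < p^k" "0 < (1-p)^(n-k)" using p by auto
  show ?thesis
    unfolding D mu ww N_def[symmetric] C_def[symmetric]
  proof -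
    have "C = N * a / b" using CF bpos by (simp add: field_simps)
    then show "C * (p ^ k * (1 - p) ^ (n - k)) = N * (a / (b * p ^ k * (1 - p) ^ (n - k)) * (p ^ k * p ^ k * ((1 - p) ^ (n - k) * (1 - p) ^ (n - k))))"
      using pk bpos by (simp add: field_simps)
  qed
qed

lemma N_pos: "0 < real (card (two_to_one_maps n))"
  using finite_Pi Pi_ne by (simp add: card_gt_0_iff)

lemma D_key:
  fixes \<Phi> :: "(nat \<Rightarrow> bool) \<Rightarrow> (nat \<Rightarrow> nat) \<Rightarrow> real" and \<psi> :: "(nat \<Rightarrow> bool) \<Rightarrow> real"
  assumes p: "0 < p" "p < 1"
    and h: "\<And>x. x \<in> cube (2*n) \<Longrightarrow> (\<Sum>\<pi>\<in>Cset n x. \<Phi> x \<pi>) = real (card (Cset n x)) * \<psi> x"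
  shows "(\<Sum>\<pi>\<in>two_to_one_maps n. \<Sum>y\<in>cube n. mu p n y * \<Phi> (emb n \<pi> y) \<pi>)
       = real (card (two_to_one_maps n)) * (\<Sum>x\<in>cube (2*n). Dm p n x * \<psi> x)"
proof -
  have "(\<Sum>\<pi>\<in>two_to_one_maps n. \<Sum>y\<in>cube n. mu p n y * \<Phi> (emb n \<pi> y) \<pi>)
      = (\<Sum>x\<in>cube (2*n). ww p n x * (\<Sum>\<pi>\<in>Cset n x. \<Phi> x \<pi>))" by (rule key)
  also have "\<dots> = (\<Sum>x\<in>cube (2*n). real (card (two_to_one_maps n)) * (Dm p n x * \<psi> x))"
  proof (rule sum.cong[OF refl])
    fix x assume x: "x \<in> cube (2*n)"
    have "ww p n x * (\<Sum>\<pi>\<in>Cset n x. \<Phi> x \<pi>) = (real (card (Cset n x)) * ww p n x) * \<psi> x"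
      using h[OF x] by simp
    also have "\<dots> = real (card (two_to_one_maps n)) * (Dm p n x * \<psi> x)" using D_eq[OF p x] by simp
    finally show "ww p n x * (\<Sum>\<pi>\<in>Cset n x. \<Phi> x \<pi>) = real (card (two_to_one_maps n)) * (Dm p n x * \<psi> x)" .
  qed
  also have "\<dots> = real (card (two_to_one_maps n)) * (\<Sum>x\<in>cube (2*n). Dm p n x * \<psi> x)"
    by (simp add: sum_distrib_left)
  finally show ?thesis .
qed

lemma D_push:
  fixes \<phi> :: "nat \<Rightarrow> real"
  assumes p: "0 < p" "p < 1"
  shows "(\<Sum>x\<in>cube (2*n). Dm p n x * \<phi> (wt x div 2)) = (\<Sum>y\<in>cube n. mu p n y * \<phi> (wt y))"
proof -
  let ?N = "real (card (two_to_one_maps n))"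
  have "?N * (\<Sum>x\<in>cube (2*n). Dm p n x * \<phi> (wt x div 2))
      = (\<Sum>\<pi>\<in>two_to_one_maps n. \<Sum>y\<in>cube n. mu p n y * \<phi> (wt (emb n \<pi> y) div 2))"
    by (rule D_key[OF p, symmetric]) simp
  also have "\<dots> = (\<Sum>\<pi>\<in>two_to_one_maps n. \<Sum>y\<in>cube n. mu p n y * \<phi> (wt y))"
    by (rule sum.cong[OF refl], rule sum.cong[OF refl]) (simp add: wt_emb)
  also have "\<dots> = ?N * (\<Sum>y\<in>cube n. mu p n y * \<phi> (wt y))" by simp
  finally show ?thesis using N_pos[of n] by simp
qed

lemma wt_flip:
  assumes x: "x \<in> cube m" and i: "i < m"
  shows "even (wt (flip x i)) \<longleftrightarrow> odd (wt x)"
proof (cases "x i")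
  case True
  have "{j. flip x i j} = {j. x j} - {i}" using True by (auto simp: flip_def)
  then have "wt (flip x i) = wt x - 1" using True finite_ones[OF x] by (simp add: wt_def)
  moreover have "wt x \<ge> 1" using True finite_ones[OF x] by (simp add: wt_def card_gt_0_iff Suc_le_eq) blast
  ultimately show ?thesis by auto
next
  case False
  have "{j. flip x i j} = insert i {j. x j}" using False by (auto simp: flip_def)
  then have "wt (flip x i) = wt x + 1" using False finite_ones[OF x] by (simp add: wt_def)
  then show ?thesis by auto
qed

lemma flip_sum:
  fixes \<phi> :: "(nat \<Rightarrow> bool) \<Rightarrow> real"
  assumes i: "i < m"
  shows "(\<Sum>x\<in>cube m. \<phi> (flip x i)) = (\<Sum>x\<in>cube m. \<phi> x)"
  by (rule sum.reindex_bij_witness[where i="\<lambda>x. flip x i" and j="\<lambda>x. flip x i"])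
     (auto simp: flip_cube[OF _ i])

lemma even_split:
  fixes \<phi> :: "(nat \<Rightarrow> bool) \<Rightarrow> real"
  assumes i: "i < m"
  shows "(\<Sum>x\<in>cube m. \<phi> x) = (\<Sum>x\<in>{x\<in>cube m. even (wt x)}. \<phi> x + \<phi> (flip x i))"
proof -
  have fin: "finite (cube m)" by (rule finite_cube)
  have "(\<Sum>x\<in>cube m. \<phi> x) = (\<Sum>x\<in>{x\<in>cube m. even (wt x)}. \<phi> x) + (\<Sum>x\<in>{x\<in>cube m. odd (wt x)}. \<phi> x)"
  proof -
    have "cube m = {x\<in>cube m. even (wt x)} \<union> {x\<in>cube m. odd (wt x)}" by auto
    moreover have "{x\<in>cube m. even (wt x)} \<inter> {x\<in>cube m. odd (wt x)} = {}" by auto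
    ultimately show ?thesis using fin by (metis (no_types, lifting) finite_Un sum.union_disjoint)
  qed
  also have "(\<Sum>x\<in>{x\<in>cube m. odd (wt x)}. \<phi> x) = (\<Sum>x\<in>{x\<in>cube m. even (wt x)}. \<phi> (flip x i))"
    by (rule sum.reindex_bij_witness[where i="\<lambda>x. flip x i" and j="\<lambda>x. flip x i"])
       (auto simp: flip_cube[OF _ i] wt_flip[OF _ i])
  finally show ?thesis by (simp add: sum.distrib)
qed



lemma Dm_nonneg: "0 < p \<Longrightarrow> p < 1 \<Longrightarrow> x \<in> cube (2*n) \<Longrightarrow> 0 \<le> Dm p n x"
  unfolding Dm_def using gk_pos[of p "wt x div 2" n] wt_le[of x "2*n"] mu_nonneg[of p "2*n" x]
  by auto

lemma Dm_ge: "0 < p \<Longrightarrow> p < 1 \<Longrightarrow> x \<in> cube (2*n) \<Longrightarrow> even (wt x) \<Longrightarrow> gk p n (kc p n) * mu p (2*n) x \<le> Dm p n x"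
  unfolding Dm_def using gk_min[of p "wt x div 2" n] wt_le[of x "2*n"] mu_nonneg[of p "2*n" x]
  by (auto intro: mult_right_mono)

lemma Dm_window:
  assumes lam: "0 < lam" "lam < 1/2" "lam < p" "p < 1 - lam" and L: "1 \<le> L" "L \<le> real n * lam / 4"
    and x: "x \<in> cube (2*n)" and w: "\<bar>real (wt x div 2) - real n * p\<bar> \<le> L"
  shows "Dm p n x \<le> gk p n (kc p n) * exp (8 * L^2 / (real n * lam)) * mu p (2*n) x"
proof -
  have p: "0 < p" "p < 1" using lam by auto
  have "gk p n (wt x div 2) \<le> gk p n (kc p n) * exp (8 * L^2 / (real n * lam))"
    by (rule gk_window[OF lam L]) (use wt_le[OF x] w in auto)
  moreover have g0: "0 \<le> gk p n (kc p n)" using gk_pos[OF p kc_props(1)[OF p, of n]] by simp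
  moreover have m0: "0 \<le> mu p (2*n) x" using mu_nonneg[of p "2*n" x] p by simp
  ultimately show ?thesis unfolding Dm_def
    by (auto intro: mult_right_mono mult_nonneg_nonneg)
qed

lemma sum_Dm: "0 < p \<Longrightarrow> p < 1 \<Longrightarrow> (\<Sum>x\<in>cube (2*n). Dm p n x) = 1"
  using D_push[of p n "\<lambda>_. 1"] E0[where m=n and p=p] by simp

lemma even_mass:
  assumes lam: "0 < lam" "lam < 1/2" "lam < p" "p < 1 - lam" and i: "i < m"
    and \<phi>: "\<And>x. 0 \<le> \<phi> x" "\<And>x. \<phi> (flip x i) = \<phi> x"
  shows "lam * (\<Sum>x\<in>cube m. mu p m x * \<phi> x) \<le> (\<Sum>x\<in>{x\<in>cube m. even (wt x)}. mu p m x * \<phi> x)"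
proof -
  have "(\<Sum>x\<in>cube m. mu p m x * \<phi> x) = (\<Sum>x\<in>{x\<in>cube m. even (wt x)}. mu p m x * \<phi> x + mu p m (flip x i) * \<phi> (flip x i))"
    by (rule even_split[OF i])
  also have "\<dots> \<le> (\<Sum>x\<in>{x\<in>cube m. even (wt x)}. (mu p m x * \<phi> x) / lam)"
  proof (rule sum_mono)
    fix x
    have "mu p m (flip x i) \<le> mu p m x / lam - mu p m x" by (rule mu_flip_le[OF i lam(1,3,4)])
    then have "mu p m (flip x i) * \<phi> x \<le> (mu p m x / lam - mu p m x) * \<phi> x" using \<phi>(1) by (rule mult_right_mono)
    then show "mu p m x * \<phi> x + mu p m (flip x i) * \<phi> (flip x i) \<le> (mu p m x * \<phi> x) / lam"
      using \<phi>(2)[of x] by (simp add: algebra_simps)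
  qed
  also have "\<dots> = (\<Sum>x\<in>{x\<in>cube m. even (wt x)}. mu p m x * \<phi> x) / lam" by (simp add: sum_divide_distrib)
  finally show ?thesis using lam by (simp add: field_simps)
qed

lemma gkc_upper:
  assumes lam: "0 < lam" "lam < 1/2" "lam < p" "p < 1 - lam" and n: "0 < n"
  shows "gk p n (kc p n) \<le> 1 / lam"
proof -
  have p: "0 < p" "p < 1" using lam by auto
  have "lam * (\<Sum>x\<in>cube (2*n). mu p (2*n) x * 1) \<le> (\<Sum>x\<in>{x\<in>cube (2*n). even (wt x)}. mu p (2*n) x * 1)"
    by (rule even_mass[OF lam, of 0]) (use n in auto)
  then have em: "lam \<le> (\<Sum>x\<in>{x\<in>cube (2*n). even (wt x)}. mu p (2*n) x)" using E0[where m="2*n" and p=p] by simp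
  have "gk p n (kc p n) * (\<Sum>x\<in>{x\<in>cube (2*n). even (wt x)}. mu p (2*n) x)
      = (\<Sum>x\<in>{x\<in>cube (2*n). even (wt x)}. gk p n (kc p n) * mu p (2*n) x)" by (simp add: sum_distrib_left)
  also have "\<dots> \<le> (\<Sum>x\<in>{x\<in>cube (2*n). even (wt x)}. Dm p n x)"
    by (rule sum_mono) (use Dm_ge[OF p] in auto)
  also have "\<dots> \<le> (\<Sum>x\<in>cube (2*n). Dm p n x)"
    by (rule sum_mono2[OF finite_cube]) (auto simp: Dm_nonneg[OF p])
  also have "\<dots> = 1" by (rule sum_Dm[OF p])
  finally have "gk p n (kc p n) * lam \<le> 1"
    using em gk_pos[OF p kc_props(1)[OF p]] by (smt (verit) mult_left_mono)
  then show ?thesis using lam by (simp add: field_simps)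
qed

lemma window_mass:
  assumes p: "0 < p" "p < 1" and L: "0 < L"
  shows "1 - real n / (4 * L^2) \<le> (\<Sum>x\<in>cube (2*n). Dm p n x * of_bool (\<bar>real (wt x div 2) - real n * p\<bar> \<le> L))"
proof -
  have "(\<Sum>x\<in>cube (2*n). Dm p n x * of_bool (\<bar>real (wt x div 2) - real n * p\<bar> \<le> L))
      = (\<Sum>y\<in>cube n. mu p n y * of_bool (\<bar>real (wt y) - real n * p\<bar> \<le> L))"
    by (rule D_push[OF p, of n "\<lambda>k. of_bool (\<bar>real k - real n * p\<bar> \<le> L)"])
  also have "\<dots> = (\<Sum>y\<in>cube n. mu p n y) - (\<Sum>y\<in>cube n. mu p n y * (if \<bar>real (wt y) - real n * p\<bar> > L then 1 else 0))"
    by (simp only: sum_subtractf[symmetric]) (rule sum.cong[OF refl], auto)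
  also have "\<dots> \<ge> 1 - real n / (4 * L^2)" using chebyshev[where p=p and L=L and m=n] p L E0[where m=n and p=p] by simp
  finally show ?thesis .
qed

lemma gkc_lower:
  assumes lam: "0 < lam" "lam < 1/2" "lam < p" "p < 1 - lam" and n: "1 \<le> sqrt (real n)" "sqrt (real n) \<le> real n * lam / 4"
  shows "3/4 * exp (- 8 / lam) \<le> gk p n (kc p n)"
proof -
  have p: "0 < p" "p < 1" using lam by auto
  define L where "L = sqrt (real n)"
  have L2: "L^2 = real n" unfolding L_def by simp
  have L: "1 \<le> L" "L \<le> real n * lam / 4" using n by (auto simp: L_def)
  have "0 < real n" using n by auto
  have ex: "8 * L^2 / (real n * lam) = 8 / lam" unfolding L2 using \<open>0 < real n\<close> by simp
  have "1 - real n / (4 * L^2) \<le> (\<Sum>x\<in>cube (2*n). Dm p n x * of_bool (\<bar>real (wt x div 2) - real n * p\<bar> \<le> L))"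
    by (rule window_mass[OF p]) (use L in auto)
  also have "\<dots> \<le> (\<Sum>x\<in>cube (2*n). gk p n (kc p n) * exp (8 / lam) * mu p (2*n) x)"
  proof (rule sum_mono)
    fix x assume x: "x \<in> cube (2*n)"
    show "Dm p n x * of_bool (\<bar>real (wt x div 2) - real n * p\<bar> \<le> L) \<le> gk p n (kc p n) * exp (8 / lam) * mu p (2*n) x"
    proof (cases "\<bar>real (wt x div 2) - real n * p\<bar> \<le> L")
      case True
      then show ?thesis using Dm_window[OF lam L x True] ex by simp
    next
      case False
      have g0: "0 \<le> gk p n (kc p n)" using gk_pos[OF p kc_props(1)[OF p, of n]] by simp
      then show ?thesis using False mu_nonneg[of p "2*n" x] p by simp
    qed
  qed
  also have "\<dots> = gk p n (kc p n) * exp (8 / lam)" by (simp add: sum_distrib_left[symmetric] E0)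
  finally have "3/4 \<le> gk p n (kc p n) * exp (8 / lam)" using L2 \<open>0 < real n\<close> by simp
  then have "3/4 * exp (- 8 / lam) \<le> gk p n (kc p n) * exp (8 / lam) * exp (- 8 / lam)" by simp
  also have "\<dots> = gk p n (kc p n)" by (simp add: mult.assoc exp_minus[symmetric] exp_add[symmetric])
  finally show ?thesis .
qed



definition hh :: "((nat \<Rightarrow> bool) \<Rightarrow> bool) \<Rightarrow> (nat \<Rightarrow> bool) \<Rightarrow> nat \<Rightarrow> real" where
  "hh f z j = of_bool (f z \<noteq> f (flip z j))"

definition avg :: "nat \<Rightarrow> nat \<Rightarrow> ((nat \<Rightarrow> bool) \<Rightarrow> bool) \<Rightarrow> (nat \<Rightarrow> bool) \<Rightarrow> real" where
  "avg n i f x = (if Mset n i x = {} then 0 else (\<Sum>j\<in>Mset n i x. hh f (flip x i) j) / real (card (Mset n i x)))"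

definition Hf :: "nat \<Rightarrow> nat \<Rightarrow> ((nat \<Rightarrow> bool) \<Rightarrow> bool) \<Rightarrow> (nat \<Rightarrow> bool) \<Rightarrow> (nat \<Rightarrow> nat) \<Rightarrow> real" where
  "Hf n i f x \<pi> = (\<Sum>j\<in>Mset n i x. of_bool (\<pi> j = \<pi> i) * hh f (flip x i) j)"

lemma hh_nonneg: "0 \<le> hh f z j" by (simp add: hh_def)
lemma hh_le1: "hh f z j \<le> 1" by (simp add: hh_def)

lemma H_sum:
  assumes i: "i < 2*n"
  shows "(\<Sum>\<pi>\<in>Cset n x. Hf n i f x \<pi>) = real (card (Cset n x)) * avg n i f x"
proof (cases "Mset n i x = {}")
  case True
  then show ?thesis by (simp add: Hf_def avg_def)
next
  case False
  then obtain j0 where j0: "j0 \<in> Mset n i x" by blast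
  define P where "P = card (Pset n i x j0)"
  have Pj: "card (Pset n i x j) = P" if "j \<in> Mset n i x" for j
    unfolding P_def by (rule P_const[OF i that j0])
  have cM: "card (Mset n i x) * P = card (Cset n x)"
    using P_sum[OF i, of x] Pj by simp
  have Mpos: "0 < card (Mset n i x)" using False finite_Mset by (simp add: card_gt_0_iff)
  have "(\<Sum>\<pi>\<in>Cset n x. Hf n i f x \<pi>) = (\<Sum>j\<in>Mset n i x. \<Sum>\<pi>\<in>Cset n x. of_bool (\<pi> j = \<pi> i) * hh f (flip x i) j)"
    unfolding Hf_def by (rule sum.swap)
  also have "\<dots> = (\<Sum>j\<in>Mset n i x. real P * hh f (flip x i) j)"
  proof (rule sum.cong[OF refl])
    fix j assume j: "j \<in> Mset n i x"
    have "(\<Sum>\<pi>\<in>Cset n x. of_bool (\<pi> j = \<pi> i) * hh f (flip x i) j) = (\<Sum>\<pi>\<in>Cset n x. of_bool (\<pi> j = \<pi> i)) * hh f (flip x i) j"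
      by (simp add: sum_distrib_right)
    also have "(\<Sum>\<pi>\<in>Cset n x. (of_bool (\<pi> j = \<pi> i) :: real)) = real (card (Pset n i x j))"
    proof -
      have "real (card (Pset n i x j)) = (\<Sum>\<pi>\<in>Cset n x. if \<pi> j = \<pi> i then 1 else 0)"
        unfolding Pset_def by (subst real_of_card) (rule sum.inter_filter[OF finite_Cset])
      then show ?thesis by (simp add: of_bool_def)
    qed
    finally show "(\<Sum>\<pi>\<in>Cset n x. of_bool (\<pi> j = \<pi> i) * hh f (flip x i) j) = real P * hh f (flip x i) j"
      using Pj[OF j] by simp
  qed
  also have "\<dots> = real P * (\<Sum>j\<in>Mset n i x. hh f (flip x i) j)" by (simp add: sum_distrib_left)
  also have "\<dots> = real (card (Cset n x)) * avg n i f x"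
    unfolding avg_def using False Mpos cM[symmetric] by (simp add: field_simps)
  finally show ?thesis .
qed

lemma pointwise:
  assumes p: "\<pi> \<in> two_to_one_maps n" and i: "i < 2*n" and y: "y \<in> cube n"
  shows "of_bool (f (emb n \<pi> y) \<noteq> f (flip (emb n \<pi> y) i)) - Hf n i f (emb n \<pi> y) \<pi>
         \<le> of_bool (f (emb n \<pi> y) \<noteq> f (emb n \<pi> (flip y (\<pi> i))))"
proof -
  define x where "x = emb n \<pi> y"
  have xi: "x \<in> emb n \<pi> ` cube n" using y by (simp add: x_def)
  obtain j where j: "{j'\<in>Mset n i x. \<pi> j' = \<pi> i} = {j}" "j \<noteq> i" "j < 2*n"
    and all: "\<forall>l<2*n. \<pi> l = \<pi> i \<longleftrightarrow> l = i \<or> l = j"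
    using partner[OF p i xi] by blast
  have H: "Hf n i f x \<pi> = hh f (flip x i) j"
  proof -
    have "Hf n i f x \<pi> = (\<Sum>j'\<in>{j'\<in>Mset n i x. \<pi> j' = \<pi> i}. hh f (flip x i) j')"
      unfolding Hf_def by (subst sum.inter_filter[OF finite_Mset]) (rule sum.cong, auto)
    then show ?thesis using j(1) by simp
  qed
  have E: "emb n \<pi> (flip y (\<pi> i)) = flip (flip x i) j"
  proof
    fix l
    show "emb n \<pi> (flip y (\<pi> i)) l = flip (flip x i) j l"
    proof (cases "l < 2*n")
      case True
      then show ?thesis using all j(2) by (auto simp: emb_def flip_def x_def)
    next
      case False
      then have "l \<noteq> i" "l \<noteq> j" using i j(3) by auto
      then show ?thesis using False by (simp add: emb_def flip_def x_def)
    qed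
  qed
  show ?thesis unfolding x_def[symmetric] E H hh_def by auto
qed

lemma sum_I:
  assumes lam: "0 < lam" "lam < 1/2" "lam < p" "p < 1 - lam" and i: "i < 2*n"
  shows "lam^2 * real (card (two_to_one_maps n)) *
          ((\<Sum>x\<in>cube (2*n). Dm p n x * of_bool (f x \<noteq> f (flip x i))) - (\<Sum>x\<in>cube (2*n). Dm p n x * avg n i f x))
      \<le> (\<Sum>\<pi>\<in>two_to_one_maps n. influence p n (bval (minor (2*n) f \<pi>)) (\<pi> i))"
proof -
  have p: "0 < p" "p < 1" using lam by auto
  let ?N = "real (card (two_to_one_maps n))"
  let ?e = "\<lambda>x. (of_bool (f x \<noteq> f (flip x i)) :: real)"
  have K1: "(\<Sum>\<pi>\<in>two_to_one_maps n. \<Sum>y\<in>cube n. mu p n y * ?e (emb n \<pi> y))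
       = ?N * (\<Sum>x\<in>cube (2*n). Dm p n x * ?e x)"
    by (rule D_key[OF p, where \<Phi>="\<lambda>x \<pi>. ?e x"]) simp
  have K2: "(\<Sum>\<pi>\<in>two_to_one_maps n. \<Sum>y\<in>cube n. mu p n y * Hf n i f (emb n \<pi> y) \<pi>)
       = ?N * (\<Sum>x\<in>cube (2*n). Dm p n x * avg n i f x)"
    by (rule D_key[OF p]) (rule H_sum[OF i])
  have "lam^2 * (?N * (\<Sum>x\<in>cube (2*n). Dm p n x * ?e x) - ?N * (\<Sum>x\<in>cube (2*n). Dm p n x * avg n i f x))
     = lam^2 * (\<Sum>\<pi>\<in>two_to_one_maps n. \<Sum>y\<in>cube n. mu p n y * (?e (emb n \<pi> y) - Hf n i f (emb n \<pi> y) \<pi>))"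
    unfolding K1[symmetric] K2[symmetric] by (simp add: sum_subtractf algebra_simps)
  also have "\<dots> \<le> lam^2 * (\<Sum>\<pi>\<in>two_to_one_maps n. \<Sum>y\<in>cube n. mu p n y * of_bool (f (emb n \<pi> y) \<noteq> f (emb n \<pi> (flip y (\<pi> i)))))"
  proof (rule mult_left_mono[OF sum_mono[OF sum_mono]])
    fix \<pi> y assume a: "\<pi> \<in> two_to_one_maps n" "y \<in> cube n"
    have "?e (emb n \<pi> y) - Hf n i f (emb n \<pi> y) \<pi> \<le> of_bool (f (emb n \<pi> y) \<noteq> f (emb n \<pi> (flip y (\<pi> i))))"
      by (rule pointwise[OF a(1) i a(2)])
    then show "mu p n y * (?e (emb n \<pi> y) - Hf n i f (emb n \<pi> y) \<pi>) \<le> mu p n y * of_bool (f (emb n \<pi> y) \<noteq> f (emb n \<pi> (flip y (\<pi> i))))"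
      by (rule mult_left_mono) (auto simp: mu_nonneg p less_imp_le)
  qed simp
  also have "\<dots> = (\<Sum>\<pi>\<in>two_to_one_maps n. lam^2 * (\<Sum>y\<in>cube n. mu p n y * of_bool (minor (2*n) f \<pi> y \<noteq> minor (2*n) f \<pi> (flip y (\<pi> i)))))"
    by (simp add: sum_distrib_left minor_emb)
  also have "\<dots> \<le> (\<Sum>\<pi>\<in>two_to_one_maps n. influence p n (bval (minor (2*n) f \<pi>)) (\<pi> i))"
    by (rule sum_mono) (rule infl_lower[OF lam(1,3,4)])
  finally show ?thesis by (simp add: algebra_simps)
qed



lemma T1:
  assumes lam: "0 < lam" "lam < 1/2" "lam < p" "p < 1 - lam" and i: "i < 2*n"
  shows "gk p n (kc p n) * lam * influence p (2*n) (bval f) i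
      \<le> (\<Sum>x\<in>cube (2*n). Dm p n x * of_bool (f x \<noteq> f (flip x i)))"
proof -
  have p: "0 < p" "p < 1" using lam by auto
  let ?e = "\<lambda>x. (of_bool (f x \<noteq> f (flip x i)) :: real)"
  have g0: "0 \<le> gk p n (kc p n)" using gk_pos[OF p kc_props(1)[OF p, of n]] by simp
  have a: "influence p (2*n) (bval f) i \<le> (\<Sum>x\<in>cube (2*n). mu p (2*n) x * ?e x)"
    by (rule infl_upper) (use p in auto)
  have b: "lam * (\<Sum>x\<in>cube (2*n). mu p (2*n) x * ?e x) \<le> (\<Sum>x\<in>{x\<in>cube (2*n). even (wt x)}. mu p (2*n) x * ?e x)"
    by (rule even_mass[OF lam i]) auto
  have c: "gk p n (kc p n) * (\<Sum>x\<in>{x\<in>cube (2*n). even (wt x)}. mu p (2*n) x * ?e x)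
      \<le> (\<Sum>x\<in>{x\<in>cube (2*n). even (wt x)}. Dm p n x * ?e x)"
    unfolding sum_distrib_left
  proof (rule sum_mono)
    fix x assume "x \<in> {x\<in>cube (2*n). even (wt x)}"
    then have "gk p n (kc p n) * mu p (2*n) x \<le> Dm p n x" using Dm_ge[OF p] by auto
    then show "gk p n (kc p n) * (mu p (2*n) x * ?e x) \<le> Dm p n x * ?e x"
      by (simp add: mult.assoc[symmetric] mult_right_mono)
  qed
  have d: "(\<Sum>x\<in>{x\<in>cube (2*n). even (wt x)}. Dm p n x * ?e x) \<le> (\<Sum>x\<in>cube (2*n). Dm p n x * ?e x)"
    by (rule sum_mono2[OF finite_cube]) (auto simp: Dm_nonneg[OF p])
  have "gk p n (kc p n) * lam * influence p (2*n) (bval f) i \<le> gk p n (kc p n) * (lam * (\<Sum>x\<in>cube (2*n). mu p (2*n) x * ?e x))"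
    using a g0 lam by (simp add: mult.assoc mult_left_mono)
  also have "\<dots> \<le> gk p n (kc p n) * (\<Sum>x\<in>{x\<in>cube (2*n). even (wt x)}. mu p (2*n) x * ?e x)"
    using b g0 by (rule mult_left_mono)
  finally show ?thesis using c d by linarith
qed

lemma M_card:
  assumes lam: "0 < lam" "lam < 1/2" "lam < p" "p < 1 - lam" and L: "2 * L + 1 \<le> real n * lam"
    and x: "x \<in> cube (2*n)" and ev: "even (wt x)" and i: "i < 2*n"
    and w: "\<bar>real (wt x div 2) - real n * p\<bar> \<le> L"
  shows "lam * real n \<le> real (card (Mset n i x))"
proof -
  have fo: "finite {j. x j}" using finite_ones[OF x] .
  have so: "{j. x j} \<subseteq> {..<2*n}" using ones_sub[OF x] .
  obtain k where k: "wt x = 2*k" using ev by (auto elim: evenE)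
  have kd: "wt x div 2 = k" using k by simp
  have w': "\<bar>real k - real n * p\<bar> \<le> L" using w kd by simp
  have nl: "lam * real n \<le> real n * p" "lam * real n \<le> real n * (1-p)"
    using mult_right_mono[of lam p "real n"] mult_right_mono[of lam "1-p" "real n"] lam by (auto simp: mult.commute)
  have c1: "real n * lam = lam * real n" "real n * (1-p) = real n - real n * p" by (simp_all add: algebra_simps)
  show ?thesis
  proof (cases "x i")
    case True
    have iA: "i \<in> {j. x j}" using True by simp
    have "Mset n i x = {j. x j} - {i}" using so True by (auto simp: Mset_def)
    then have "card (Mset n i x) = card {j. x j} - 1" using fo iA by simp
    moreover have "0 < card {j. x j}" using fo iA by (auto simp: card_gt_0_iff)
    ultimately have "real (card (Mset n i x)) = 2 * real k - 1" using k unfolding wt_def by simp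
    then show ?thesis using w' nl L c1 by linarith
  next
    case False
    have iB: "i \<in> {..<2*n} - {j. x j}" using False i by simp
    have "Mset n i x = ({..<2*n} - {j. x j}) - {i}" using False i by (auto simp: Mset_def)
    then have "card (Mset n i x) = card ({..<2*n} - {j. x j}) - 1" using iB by simp
    also have "card ({..<2*n} - {j. x j}) = 2*n - card {j. x j}" using so fo by (simp add: card_Diff_subset)
    finally have cm: "card (Mset n i x) = 2*n - card {j. x j} - 1" .
    have "{j. x j} \<subset> {..<2*n}" using so iB by auto
    then have "card {j. x j} < 2*n" using psubset_card_mono[of "{..<2*n}"] by simp
    then have "real (card (Mset n i x)) = 2 * real n - 2 * real k - 1" using cm k unfolding wt_def by simp
    then show ?thesis using w' nl L c1 by linarith
  qed
qed

lemma sum_s: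
  assumes lam: "0 < lam" "lam < p" "p < 1 - lam"
  shows "(\<Sum>x\<in>cube (2*n). mu p (2*n) x * (\<Sum>j<2*n. hh f x j)) \<le> total_influence p (2*n) (bval f) / lam^2"
proof -
  have "(\<Sum>x\<in>cube (2*n). mu p (2*n) x * (\<Sum>j<2*n. hh f x j)) = (\<Sum>j<2*n. \<Sum>x\<in>cube (2*n). mu p (2*n) x * hh f x j)"
    unfolding sum_distrib_left by (rule sum.swap)
  also have "\<dots> \<le> (\<Sum>j<2*n. influence p (2*n) (bval f) j / lam^2)"
  proof (rule sum_mono)
    fix j
    have "lam^2 * (\<Sum>x\<in>cube (2*n). mu p (2*n) x * hh f x j) \<le> influence p (2*n) (bval f) j"
      unfolding hh_def by (rule infl_lower[OF lam])
    then show "(\<Sum>x\<in>cube (2*n). mu p (2*n) x * hh f x j) \<le> influence p (2*n) (bval f) j / lam^2"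
      using lam by (simp add: field_simps)
  qed
  also have "\<dots> = total_influence p (2*n) (bval f) / lam^2"
    by (simp add: total_influence_def sum_divide_distrib)
  finally show ?thesis .
qed


lemma avg_bounds: "0 \<le> avg n i f x" "avg n i f x \<le> 1"
proof -
  show "0 \<le> avg n i f x" unfolding avg_def by (auto intro!: divide_nonneg_nonneg sum_nonneg hh_nonneg)
  show "avg n i f x \<le> 1"
  proof (cases "Mset n i x = {}")
    case False
    have "(\<Sum>j\<in>Mset n i x. hh f (flip x i) j) \<le> (\<Sum>j\<in>Mset n i x. 1)" by (rule sum_mono) (rule hh_le1)
    then have "(\<Sum>j\<in>Mset n i x. hh f (flip x i) j) \<le> real (card (Mset n i x))" by simp
    moreover have "0 < card (Mset n i x)" using False finite_Mset by (simp add: card_gt_0_iff)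
    ultimately show ?thesis unfolding avg_def using False by (simp add: divide_le_eq_1)
  qed (simp add: avg_def)
qed

lemma avg_window:
  assumes lam: "0 < lam" "lam < 1/2" "lam < p" "p < 1 - lam" and L: "2 * L + 1 \<le> real n * lam"
    and x: "x \<in> cube (2*n)" and ev: "even (wt x)" and i: "i < 2*n"
    and w: "\<bar>real (wt x div 2) - real n * p\<bar> \<le> L"
  shows "avg n i f x \<le> (\<Sum>j<2*n. hh f (flip x i) j) / (lam * real n)"
proof -
  have M: "lam * real n \<le> real (card (Mset n i x))" by (rule M_card[OF lam L x ev i w])
  have "0 \<le> L" using w by linarith
  then have ln: "0 < lam * real n" using L by (simp add: mult.commute)
  then have ne: "Mset n i x \<noteq> {}" using M by auto
  have S: "(\<Sum>j\<in>Mset n i x. hh f (flip x i) j) \<le> (\<Sum>j<2*n. hh f (flip x i) j)"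
    by (rule sum_mono2) (auto simp: Mset_def hh_nonneg)
  have S0: "0 \<le> (\<Sum>j\<in>Mset n i x. hh f (flip x i) j)" by (auto intro: sum_nonneg hh_nonneg)
  have "avg n i f x = (\<Sum>j\<in>Mset n i x. hh f (flip x i) j) / real (card (Mset n i x))"
    using ne by (simp add: avg_def)
  also have "\<dots> \<le> (\<Sum>j\<in>Mset n i x. hh f (flip x i) j) / (lam * real n)"
    by (rule divide_left_mono[OF M S0]) (use ln M in auto)
  also have "\<dots> \<le> (\<Sum>j<2*n. hh f (flip x i) j) / (lam * real n)"
    by (rule divide_right_mono[OF S]) (use ln in auto)
  finally show ?thesis .
qed

lemma T2:
  assumes lam: "0 < lam" "lam < 1/2" "lam < p" "p < 1 - lam" and L: "1 \<le> L" "L \<le> real n * lam / 4"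
    "2 * L + 1 \<le> real n * lam" and i: "i < 2*n"
  shows "(\<Sum>x\<in>cube (2*n). Dm p n x * avg n i f x)
      \<le> gk p n (kc p n) * exp (8 * L^2 / (real n * lam)) * total_influence p (2*n) (bval f) / (lam^4 * real n)
         + real n / (4 * L^2)"
proof -
  have p: "0 < p" "p < 1" using lam by auto
  define Gw where "Gw = gk p n (kc p n) * exp (8 * L^2 / (real n * lam))"
  have Gw0: "0 \<le> Gw" unfolding Gw_def using gk_pos[OF p kc_props(1)[OF p, of n]] by simp
  have ln: "0 < lam * real n" using L by (simp add: mult.commute)
  define c where "c = Gw / (lam^2 * real n)"
  have c0: "0 \<le> c" unfolding c_def using Gw0 ln by (simp add: power2_eq_square)
  let ?inW = "\<lambda>x. \<bar>real (wt x div 2) - real n * p\<bar> \<le> L"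
  let ?s = "\<lambda>z. (\<Sum>j<2*n. hh f z j)"
  have pw: "Dm p n x * avg n i f x \<le> of_bool (?inW x) * (c * (mu p (2*n) (flip x i) * ?s (flip x i))) + Dm p n x * of_bool (\<not> ?inW x)"
    if x: "x \<in> cube (2*n)" for x
  proof -
    have D0: "0 \<le> Dm p n x" using Dm_nonneg[OF p x] .
    have s0: "0 \<le> ?s (flip x i)" by (auto intro: sum_nonneg hh_nonneg)
    have m0: "0 \<le> mu p (2*n) (flip x i)" using mu_nonneg p by simp
    have r0: "0 \<le> c * (mu p (2*n) (flip x i) * ?s (flip x i))" using c0 s0 m0 by simp
    show ?thesis
    proof (cases "?inW x")
      case False
      then show ?thesis using D0 avg_bounds[of n i f x] by (simp add: mult_left_le)
    next
      case True
      show ?thesis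
      proof (cases "even (wt x)")
        case False
        then show ?thesis using True r0 by (simp add: Dm_def)
      next
        case ev: True
        have a: "avg n i f x \<le> ?s (flip x i) / (lam * real n)" by (rule avg_window[OF lam L(3) x ev i True])
        have d: "Dm p n x \<le> Gw * mu p (2*n) x" unfolding Gw_def by (rule Dm_window[OF lam L(1,2) x True])
        have mf: "mu p (2*n) x \<le> mu p (2*n) (flip x i) / lam"
        proof -
          have "mu p (2*n) (flip (flip x i) i) \<le> mu p (2*n) (flip x i) / lam - mu p (2*n) (flip x i)"
            by (rule mu_flip_le[OF i lam(1,3,4)])
          then show ?thesis using m0 by simp
        qed
        have "Dm p n x * avg n i f x \<le> (Gw * (mu p (2*n) (flip x i) / lam)) * (?s (flip x i) / (lam * real n))"
        proof (rule mult_mono)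
          show "Dm p n x \<le> Gw * (mu p (2*n) (flip x i) / lam)" using d mf Gw0 by (meson mult_left_mono order_trans)
          show "avg n i f x \<le> ?s (flip x i) / (lam * real n)" by (rule a)
          show "0 \<le> Gw * (mu p (2*n) (flip x i) / lam)" using Gw0 m0 lam by simp
          show "0 \<le> avg n i f x" by (rule avg_bounds)
        qed
        also have "\<dots> = c * (mu p (2*n) (flip x i) * ?s (flip x i))" unfolding c_def using lam ln
          by (simp add: field_simps power2_eq_square)
        finally show ?thesis using True by simp
      qed
    qed
  qed
  have "(\<Sum>x\<in>cube (2*n). Dm p n x * avg n i f x)
      \<le> (\<Sum>x\<in>cube (2*n). of_bool (?inW x) * (c * (mu p (2*n) (flip x i) * ?s (flip x i))) + Dm p n x * of_bool (\<not> ?inW x))"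
    by (rule sum_mono) (rule pw)
  also have "\<dots> = (\<Sum>x\<in>cube (2*n). of_bool (?inW x) * (c * (mu p (2*n) (flip x i) * ?s (flip x i))))
      + (\<Sum>x\<in>cube (2*n). Dm p n x * of_bool (\<not> ?inW x))" by (rule sum.distrib)
  also have "(\<Sum>x\<in>cube (2*n). of_bool (?inW x) * (c * (mu p (2*n) (flip x i) * ?s (flip x i))))
      \<le> (\<Sum>x\<in>cube (2*n). c * (mu p (2*n) (flip x i) * ?s (flip x i)))"
    by (rule sum_mono) (use c0 mu_nonneg p in \<open>auto intro!: mult_nonneg_nonneg sum_nonneg hh_nonneg\<close>)
  also have "\<dots> = c * (\<Sum>x\<in>cube (2*n). mu p (2*n) x * ?s x)"
    by (simp add: sum_distrib_left[symmetric] flip_sum[OF i, where \<phi>="\<lambda>z. mu p (2*n) z * ?s z"])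
  also have "\<dots> \<le> c * (total_influence p (2*n) (bval f) / lam^2)"
    by (rule mult_left_mono[OF sum_s[OF lam(1,3,4)] c0])
  also have "c * (total_influence p (2*n) (bval f) / lam^2) = Gw * total_influence p (2*n) (bval f) / (lam^4 * real n)"
    unfolding c_def by (simp add: field_simps power_def)
  also have "(\<Sum>x\<in>cube (2*n). Dm p n x * of_bool (\<not> ?inW x))
      = (\<Sum>y\<in>cube n. mu p n y * (if \<bar>real (wt y) - real n * p\<bar> > L then 1 else 0))"
    using D_push[OF p, of n "\<lambda>k. of_bool (\<not> \<bar>real k - real n * p\<bar> \<le> L)"] by (simp add: not_le of_bool_def)
  also have "\<dots> \<le> real n / (4 * L^2)" by (rule chebyshev) (use p L in auto)
  finally show ?thesis unfolding Gw_def by simp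
qed

lemma main_ineq:
  assumes lam: "0 < lam" "lam < 1/2" "lam < p" "p < 1 - lam" and L: "1 \<le> L" "L \<le> real n * lam / 4"
    "2 * L + 1 \<le> real n * lam" and i: "i < 2*n"
  shows "lam^2 * real (card (two_to_one_maps n)) *
     (gk p n (kc p n) * lam * influence p (2*n) (bval f) i
      - gk p n (kc p n) * exp (8 * L^2 / (real n * lam)) * total_influence p (2*n) (bval f) / (lam^4 * real n)
      - real n / (4 * L^2))
   \<le> (\<Sum>\<pi>\<in>two_to_one_maps n. influence p n (bval (minor (2*n) f \<pi>)) (\<pi> i))"
proof -
  have a: "gk p n (kc p n) * lam * influence p (2*n) (bval f) i
      - gk p n (kc p n) * exp (8 * L^2 / (real n * lam)) * total_influence p (2*n) (bval f) / (lam^4 * real n)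
      - real n / (4 * L^2)
      \<le> (\<Sum>x\<in>cube (2*n). Dm p n x * of_bool (f x \<noteq> f (flip x i))) - (\<Sum>x\<in>cube (2*n). Dm p n x * avg n i f x)"
    using T1[OF lam i, of f] T2[OF lam L i, of f] by linarith
  have "lam^2 * real (card (two_to_one_maps n)) *
     (gk p n (kc p n) * lam * influence p (2*n) (bval f) i
      - gk p n (kc p n) * exp (8 * L^2 / (real n * lam)) * total_influence p (2*n) (bval f) / (lam^4 * real n)
      - real n / (4 * L^2))
     \<le> lam^2 * real (card (two_to_one_maps n)) *
       ((\<Sum>x\<in>cube (2*n). Dm p n x * of_bool (f x \<noteq> f (flip x i))) - (\<Sum>x\<in>cube (2*n). Dm p n x * avg n i f x))"
    by (rule mult_left_mono[OF a]) simp
  also have "\<dots> \<le> (\<Sum>\<pi>\<in>two_to_one_maps n. influence p n (bval (minor (2*n) f \<pi>)) (\<pi> i))"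
    by (rule sum_I[OF lam i])
  finally show ?thesis .
qed



lemma fraction:
  fixes I :: "'a \<Rightarrow> real"
  assumes S: "finite S" "S \<noteq> {}" and I: "\<And>x. x \<in> S \<Longrightarrow> I x \<le> 1" and t: "0 \<le> t"
    and sum: "2 * t * real (card S) \<le> (\<Sum>x\<in>S. I x)"
  shows "t \<le> real (card {x\<in>S. t \<le> I x}) / real (card S)"
proof -
  let ?A = "{x\<in>S. t \<le> I x}"
  let ?B = "{x\<in>S. \<not> t \<le> I x}"
  have u: "(\<Sum>x\<in>?A \<union> ?B. I x) = (\<Sum>x\<in>?A. I x) + (\<Sum>x\<in>?B. I x)"
    by (rule sum.union_disjoint) (use S(1) in auto)
  have "?A \<union> ?B = S" by auto
  then have "(\<Sum>x\<in>S. I x) = (\<Sum>x\<in>?A. I x) + (\<Sum>x\<in>?B. I x)" using u by simp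
  also have "(\<Sum>x\<in>?A. I x) \<le> (\<Sum>x\<in>?A. 1)" by (rule sum_mono) (use I in auto)
  also have "(\<Sum>x\<in>?B. I x) \<le> (\<Sum>x\<in>?B. t)" by (rule sum_mono) auto
  also have "(\<Sum>x\<in>?B. t) \<le> (\<Sum>x\<in>S. t)" by (rule sum_mono2[OF S(1)]) (use t in auto)
  finally have h: "(\<Sum>x\<in>S. I x) \<le> real (card ?A) + t * real (card S)" by (simp add: mult.commute)
  have "t * real (card S) \<le> real (card ?A)" using h sum by linarith
  moreover have "0 < real (card S)" using S by (simp add: card_gt_0_iff)
  ultimately show ?thesis by (simp add: field_simps)
qed


lemma TI_nonneg: "0 \<le> p \<Longrightarrow> p \<le> 1 \<Longrightarrow> 0 \<le> total_influence p m (bval f)"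
  unfolding total_influence_def by (auto intro!: sum_nonneg infl_nonneg)

theorem mainTheorem1:
  fixes lam \<delta> :: real
  assumes "0 < lam" and "lam < 1/2" and "0 < \<delta>"
  shows "\<exists>\<gamma>>0. \<exists>\<tau>>0. \<exists>n0::nat. \<forall>(p::real) (n::nat) (f::(nat \<Rightarrow> bool) \<Rightarrow> bool) (i::nat).
      lam < p \<longrightarrow> p < 1 - lam \<longrightarrow> n0 \<le> n \<longrightarrow>
      total_influence p (2*n) (bval f) \<le> \<gamma> * real n \<longrightarrow>
      i < 2*n \<longrightarrow> influence p (2*n) (bval f) i \<ge> \<delta> \<longrightarrow>
      real (card {\<pi> \<in> two_to_one_maps n.
                    influence p n (bval (minor (2*n) f \<pi>)) (\<pi> i) \<ge> \<tau>})
        / real (card (two_to_one_maps n)) \<ge> \<tau>"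
proof -
  note lam0 = assms(1) and lamh = assms(2) and d0 = assms(3)
  define c0 where "c0 = 3/4 * exp (- 8 / lam)"
  have c0: "0 < c0" unfolding c0_def by simp
  have cld: "0 < c0 * lam * \<delta>" using c0 lam0 d0 by simp
  define T where "T = 1 + 1 / (c0 * lam * \<delta>)"
  have T1: "1 \<le> T" unfolding T_def using cld by simp
  have TT: "1 / (c0 * lam * \<delta>) \<le> T^2"
  proof -
    have "1 / (c0 * lam * \<delta>) \<le> T" unfolding T_def by simp
    also have "T \<le> T^2" using T1 by (simp add: power2_eq_square)
    finally show ?thesis .
  qed
  define G where "G = exp (8 * T^2 / lam) / lam"
  have G0: "0 < G" unfolding G_def using lam0 by simp
  define \<gamma> where "\<gamma> = c0 * lam^5 * \<delta> / (4 * G)"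
  have g0: "0 < \<gamma>" unfolding \<gamma>_def using c0 lam0 d0 G0 by simp
  define \<tau> where "\<tau> = lam^3 * c0 * \<delta> / 4"
  have t0: "0 < \<tau>" unfolding \<tau>_def using c0 lam0 d0 by simp
  define n0 where "n0 = nat \<lceil>(4 * T / lam + 1)^2\<rceil>"
  have main: "real (card {\<pi> \<in> two_to_one_maps n. influence p n (bval (minor (2*n) f \<pi>)) (\<pi> i) \<ge> \<tau>})
        / real (card (two_to_one_maps n)) \<ge> \<tau>"
    if p1: "lam < p" and p2: "p < 1 - lam" and nn: "n0 \<le> n"
      and TI: "total_influence p (2*n) (bval f) \<le> \<gamma> * real n"
      and i: "i < 2*n" and Inf: "influence p (2*n) (bval f) i \<ge> \<delta>" for p n f i
  proof -
    have lam: "0 < lam" "lam < 1/2" "lam < p" "p < 1 - lam" using lam0 lamh p1 p2 by auto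
    have p: "0 < p" "p < 1" using lam by auto
    define s where "s = sqrt (real n)"
    have s2: "s^2 = real n" unfolding s_def by simp
    have T0: "0 < T" using T1 by simp
    have "(4 * T / lam + 1)^2 \<le> real n0" unfolding n0_def by (rule real_nat_ceiling_ge)
    also have "real n0 \<le> real n" using nn by simp
    finally have sq: "(4 * T / lam + 1)^2 \<le> real n" .
    have a0: "0 \<le> 4 * T / lam + 1" using T0 lam0 by simp
    have "sqrt ((4 * T / lam + 1)^2) \<le> s" unfolding s_def by (rule real_sqrt_le_mono[OF sq])
    then have sge: "4 * T / lam + 1 \<le> s" using a0 by simp
    have "0 \<le> 4 * T / lam" using T0 lam0 by simp
    then have s1: "1 \<le> s" using sge by linarith
    have slam: "4 * T \<le> s * lam"
    proof -
      have "4 * T / lam \<le> s" using sge by simp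
      then show ?thesis using lam0 by (simp add: divide_le_eq mult.commute)
    qed
    have slam2: "4 * T + lam \<le> s * lam"
    proof -
      have "(4 * T / lam + 1) * lam \<le> s * lam" using sge lam0 by (simp add: mult_right_mono)
      moreover have "(4 * T / lam + 1) * lam = 4 * T + lam" using lam0 by (simp add: field_simps)
      ultimately show ?thesis by simp
    qed
    have nsq: "real n = s * s" using s2 by (simp add: power2_eq_square)
    define L where "L = T * s"
    have L1: "1 \<le> L" unfolding L_def using T1 s1 by (metis mult_mono' mult_1 zero_le_one order_trans)
    have L2: "L \<le> real n * lam / 4"
    proof -
      have "T * s \<le> (s * lam / 4) * s" using slam s1 by (intro mult_right_mono) auto
      then show ?thesis unfolding L_def nsq by (simp add: field_simps)
    qed
    have L3: "2 * L + 1 \<le> real n * lam"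
    proof -
      have "(4 * T + lam) * s \<le> (s * lam) * s" using slam2 s1 by (intro mult_right_mono) auto
      moreover have "2 * (T * s) + 1 \<le> 4 * T * s" using L1 unfolding L_def by simp
      moreover have "4 * T * s \<le> (4 * T + lam) * s" using lam0 s1 by (simp add: algebra_simps)
      ultimately show ?thesis unfolding L_def nsq by (simp add: algebra_simps)
    qed
    have "s \<le> T * s" using T1 s1 by simp
    then have sl: "1 \<le> sqrt (real n)" "sqrt (real n) \<le> real n * lam / 4"
      using s1 L2 unfolding s_def[symmetric] L_def by linarith+
    have gl: "c0 \<le> gk p n (kc p n)" unfolding c0_def by (rule gkc_lower[OF lam sl])
    have gu: "gk p n (kc p n) \<le> 1 / lam" by (rule gkc_upper[OF lam]) (use i in simp)
    have npos: "0 < real n" using i by simp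
    have ex: "8 * L^2 / (real n * lam) = 8 * T^2 / lam"
      unfolding L_def using npos s2 by (simp add: power_mult_distrib)
    let ?N = "real (card (two_to_one_maps n))"
    let ?g = "gk p n (kc p n)"
    let ?TI = "total_influence p (2*n) (bval f)"
    let ?Inf = "influence p (2*n) (bval f) i"
    have MI: "lam^2 * ?N * (?g * lam * ?Inf - ?g * exp (8 * T^2 / lam) * ?TI / (lam^4 * real n) - real n / (4 * L^2))
       \<le> (\<Sum>\<pi>\<in>two_to_one_maps n. influence p n (bval (minor (2*n) f \<pi>)) (\<pi> i))"
      using main_ineq[OF lam L1 L2 L3 i, of f] ex by simp
    have b1: "c0 * lam * \<delta> \<le> ?g * lam * ?Inf"
    proof -
      have "c0 * lam * \<delta> \<le> ?g * lam * \<delta>" using gl lam0 d0 by (simp add: mult_right_mono)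
      also have "\<dots> \<le> ?g * lam * ?Inf" using Inf gl c0 lam0 by (intro mult_left_mono) auto
      finally show ?thesis .
    qed
    have TI0: "0 \<le> ?TI" by (rule TI_nonneg) (use p in auto)
    have b2: "?g * exp (8 * T^2 / lam) * ?TI / (lam^4 * real n) \<le> c0 * lam * \<delta> / 4"
    proof -
      have "?g * exp (8 * T^2 / lam) * ?TI \<le> (1/lam) * exp (8 * T^2 / lam) * (\<gamma> * real n)"
        using gu TI TI0 gl c0 lam0 by (intro mult_mono) auto
      also have "\<dots> = G * \<gamma> * real n" unfolding G_def by simp
      also have "\<dots> = c0 * lam * \<delta> / 4 * (lam^4 * real n)"
        unfolding \<gamma>_def using G0 by (simp add: field_simps power_def)
      finally show ?thesis using lam0 npos by (simp add: divide_le_eq)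
    qed
    have b3: "real n / (4 * L^2) \<le> c0 * lam * \<delta> / 4"
    proof -
      have "real n / (4 * L^2) = 1 / (4 * T^2)" unfolding L_def using npos s2 T0
        by (simp add: power_mult_distrib)
      also have "\<dots> \<le> c0 * lam * \<delta> / 4"
      proof -
        have "1 \<le> T^2 * (c0 * lam * \<delta>)" using TT cld by (simp add: divide_le_eq mult.commute)
        then show ?thesis using T0 by (simp add: field_simps)
      qed
      finally show ?thesis .
    qed
    have br: "c0 * lam * \<delta> / 2 \<le> ?g * lam * ?Inf - ?g * exp (8 * T^2 / lam) * ?TI / (lam^4 * real n) - real n / (4 * L^2)"
      using b1 b2 b3 by linarith
    have "2 * \<tau> * ?N = lam^2 * ?N * (c0 * lam * \<delta> / 2)" unfolding \<tau>_def by (simp add: power_def)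
    also have "\<dots> \<le> lam^2 * ?N * (?g * lam * ?Inf - ?g * exp (8 * T^2 / lam) * ?TI / (lam^4 * real n) - real n / (4 * L^2))"
      by (rule mult_left_mono[OF br]) simp
    also have "\<dots> \<le> (\<Sum>\<pi>\<in>two_to_one_maps n. influence p n (bval (minor (2*n) f \<pi>)) (\<pi> i))" by (rule MI)
    finally have sumI: "2 * \<tau> * ?N \<le> (\<Sum>\<pi>\<in>two_to_one_maps n. influence p n (bval (minor (2*n) f \<pi>)) (\<pi> i))" .
    show ?thesis
      by (rule fraction[OF finite_Pi Pi_ne _ _ sumI]) (use p t0 infl_le1 in auto)
  qed
  show ?thesis
    apply (rule exI[of _ \<gamma>], rule conjI[OF g0], rule exI[of _ \<tau>], rule conjI[OF t0], rule exI[of _ n0])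
    apply (intro allI impI)
    apply (rule main)
         apply assumption+
    done
qed


end
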